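(* For a positive integer $g$, let $t_g$ denote the number of numerical semigroups $\Lambda$ of genus $g$ satisfying $f(\Lambda) < 3m(\Lambda)$. Let $\varphi = \frac{1+\sqrt5}{2}$. Then \[ \lim_{g \to \infty} t_g \varphi^{-g} = \frac{\varphi}{\sqrt 5} + \frac{1}{\sqrt 5} \sum_{k = 1}^{\infty} \sum_{A \in \mathcal A_k} \varphi^{ - |(A + A)\cap[0, k]| + |A| - k - 1}. \]
   Context: A numerical semigroup is a subset $\Lambda\subseteq\mathbb{N}_0$ closed under addition, containing $0$, with finite complement in $\mathbb{N}_0$. Its genus $g(\Lambda)$ is $|\mathbb{N}_0\setminus\Lambda|$, its multiplicity $m(\Lambda)$ is its smallest nonzero element, and its Frobenius number $f(\Lambda)$ is the largest element of $\mathbb{N}_0\setminus\Lambda$. For integers $a\le b$, $[a,b]=\{a,a+1,\dots,b\}$. For $A\subseteq\mathbb{Z}$, $A+A=\{a_1+a_2: a_1,a_2\in A\}$. For a positive integer $k$, $\mathcal A_k = \{A \subseteq [0, k-1] : 0 \in A \text{ and } k \notin A + A\}$. *)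

theory Defs
  imports "HOL-Analysis.Analysis"
begin

definition numerical_semigroup :: "nat set \<Rightarrow> bool" where
  "numerical_semigroup S \<longleftrightarrow> 0 \<in> S \<and> (\<forall>a\<in>S. \<forall>b\<in>S. a + b \<in> S) \<and> finite (UNIV - S)"

definition genus :: "nat set \<Rightarrow> nat" where
  "genus S = card (UNIV - S)"

definition multiplicity :: "nat set \<Rightarrow> nat" where
  "multiplicity S = (LEAST x. x \<in> S \<and> x \<noteq> 0)"

text \<open>Frobenius number: largest gap (only meaningful when the gap set is nonempty).\<close>
definition frobenius :: "nat set \<Rightarrow> nat" where
  "frobenius S = Max (UNIV - S)"

definition sumset :: "int set \<Rightarrow> int set" where
  "sumset A = {a1 + a2 | a1 a2. a1 \<in> A \<and> a2 \<in> A}"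

definition calA :: "nat \<Rightarrow> int set set" where
  "calA k = {A. A \<subseteq> {0..int k - 1} \<and> 0 \<in> A \<and> int k \<notin> sumset A}"

definition t_count :: "nat \<Rightarrow> nat" where
  "t_count g = card {S. numerical_semigroup S \<and> genus S = g \<and> frobenius S < 3 * multiplicity S}"

end

theory Submission
  imports Defs "HOL-Number_Theory.Fib"
begin


lemma sum_PiE_lessThan_Suc:
  fixes f :: "(nat \<Rightarrow> 'b) \<Rightarrow> real"
  assumes "\<And>x. finite (B x)"
  shows "(\<Sum>g\<in>PiE {..<Suc n} B. f g) = (\<Sum>g\<in>PiE {..<n} B. \<Sum>y\<in>B n. f (g(n := y)))"
proof -
  have "(\<Sum>g\<in>PiE {..<Suc n} B. f g) = (\<Sum>(y,g)\<in>B n \<times> PiE {..<n} B. f (g(n := y)))"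
    by (intro sum.reindex_bij_witness[of _ "\<lambda>(y,g). g(n := y)" "\<lambda>g. (g n, g(n := undefined))"])
       (auto simp: PiE_def extensional_def lessThan_Suc)
  also have "\<dots> = (\<Sum>y\<in>B n. \<Sum>g\<in>PiE {..<n} B. f (g(n := y)))"
    by (subst sum.cartesian_product) auto
  also have "\<dots> = (\<Sum>g\<in>PiE {..<n} B. \<Sum>y\<in>B n. f (g(n := y)))"
    by (rule sum.swap)
  finally show ?thesis .
qed

definition tc :: "nat \<Rightarrow> nat \<Rightarrow> nat" where
  "tc p q = (if p = 1 \<and> q \<noteq> 1 then 1 else 0) + (if q = 2 \<and> p \<noteq> 2 then 1 else 0)"

definition tw :: "nat \<Rightarrow> real" where
  "tw t = (if t = 0 then 23/20 else if t = 1 then 1 else 27/20)"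

definition tAl :: "nat \<Rightarrow> nat \<Rightarrow> nat set" where
  "tAl d x = {t. t \<le> 2 \<and> (x = 0 \<longrightarrow> t = 1) \<and> (1 \<le> x \<and> x < d \<longrightarrow> t \<noteq> 1)}"

lemma tAl_finite: "finite (tAl d x)"
  unfolding tAl_def by (rule finite_subset[of _ "{..2}"]) auto

lemma tw_ge1: "1 \<le> tw t" by (simp add: tw_def)

lemma transfer_step:
  fixes r :: real
  assumes r0: "0 \<le> r" and r1: "r \<le> 6181/10000" and p: "p \<le> 2"
  shows "(\<Sum>t\<in>{0,1,2::nat}. r ^ tc p t * tw t) \<le> 13/5 * tw p"
proof -
  have "r^2 \<le> r" using r0 r1 by (simp add: power2_eq_square mult_le_cancel_right1 mult_left_le)
  then have "r * r \<le> r" by (simp add: power2_eq_square)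
  then show ?thesis using p r0 r1
    by (auto simp: tc_def tw_def numeral_2_eq_2 le_Suc_eq power2_eq_square)
qed

lemma transfer_bound:
  fixes r :: real
  assumes r0: "0 \<le> r" and r1: "r \<le> 6181/10000" and d: "1 \<le> d"
  shows "(\<Sum>st\<in>PiE {..<n} (tAl d). (\<Prod>x\<in>{d..<n}. r ^ tc (st (x-d)) (st x))
          * (\<Prod>y\<in>{n-d..<n}. tw (st y))) \<le> (13/5)^n"
proof (induction n)
  case 0
  then show ?case by simp
next
  case (Suc n)
  let ?P = "\<lambda>st n. (\<Prod>x\<in>{d..<n}. r ^ tc (st (x-d)) (st x))"
  let ?W = "\<lambda>st n. (\<Prod>y\<in>{n-d..<n}. tw (st y))"
  have eq: "(\<Sum>st\<in>PiE {..<Suc n} (tAl d). ?P st (Suc n) * ?W st (Suc n))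
     = (\<Sum>st\<in>PiE {..<n} (tAl d). \<Sum>t\<in>tAl d n. ?P (st(n:=t)) (Suc n) * ?W (st(n:=t)) (Suc n))"
    by (rule sum_PiE_lessThan_Suc) (rule tAl_finite)
  have key: "(\<Sum>t\<in>tAl d n. ?P (st(n:=t)) (Suc n) * ?W (st(n:=t)) (Suc n)) \<le> 13/5 * (?P st n * ?W st n)"
    if st: "st \<in> PiE {..<n} (tAl d)" for st
  proof -
    have P0: "?P st n \<ge> 0" using r0 by (intro prod_nonneg) auto
    have Wrest: "(\<Prod>y\<in>{Suc n-d..<n}. tw ((st(n:=t)) y)) = (\<Prod>y\<in>{Suc n-d..<n}. tw (st y))" for t
      by (intro prod.cong) auto
    have Wnew: "?W (st(n:=t)) (Suc n) = (\<Prod>y\<in>{Suc n-d..<n}. tw (st y)) * tw t" for t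
    proof -
      have "{Suc n - d..<Suc n} = insert n {Suc n-d..<n}" using d by auto
      then show ?thesis using Wrest[of t] by (simp add: mult.commute)
    qed
    have R0: "(\<Prod>y\<in>{Suc n-d..<n}. tw (st y)) \<ge> 0"
      using tw_ge1 by (intro prod_nonneg) (auto intro: order_trans[OF zero_le_one])
    show ?thesis
    proof (cases "d \<le> n")
      case True
      have Al: "tAl d n = {0,1,2}" using True d unfolding tAl_def by auto
      have Pnew: "?P (st(n:=t)) (Suc n) = ?P st n * r ^ tc (st (n-d)) t" for t
      proof -
        have "{d..<Suc n} = insert n {d..<n}" using True by auto
        moreover have "?P (st(n:=t)) n = ?P st n" using d by (intro prod.cong) auto
        moreover have "n - d \<noteq> n" using d True by auto
        ultimately show ?thesis using d True by (simp add: mult.commute)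
      qed
      have Wold: "?W st n = tw (st (n-d)) * (\<Prod>y\<in>{Suc n-d..<n}. tw (st y))"
      proof -
        have "{n - d..<n} = insert (n-d) {Suc n-d..<n}" using d True by auto
        moreover have "n - d \<notin> {Suc n-d..<n}" using d True by auto
        ultimately show ?thesis by simp
      qed
      have pst: "st (n-d) \<le> 2" using st d True unfolding PiE_def Pi_def tAl_def by auto
      have "(\<Sum>t\<in>tAl d n. ?P (st(n:=t)) (Suc n) * ?W (st(n:=t)) (Suc n))
          = ?P st n * (\<Prod>y\<in>{Suc n-d..<n}. tw (st y)) * (\<Sum>t\<in>{0,1,2}. r ^ tc (st (n-d)) t * tw t)"
        unfolding Al Pnew Wnew by (simp add: sum_distrib_left algebra_simps)
      also have "\<dots> \<le> ?P st n * (\<Prod>y\<in>{Suc n-d..<n}. tw (st y)) * (13/5 * tw (st (n-d)))"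
        by (intro mult_left_mono transfer_step r0 r1 pst mult_nonneg_nonneg P0 R0)
      also have "\<dots> = 13/5 * (?P st n * ?W st n)" unfolding Wold by (simp add: algebra_simps)
      finally show ?thesis .
    next
      case False
      have Pnew: "?P (st(n:=t)) (Suc n) = ?P st n" for t
      proof -
        have "{d..<Suc n} = {}" "{d..<n} = {}" using False by auto
        then show ?thesis by simp
      qed
      have Wold: "?W st n = (\<Prod>y\<in>{Suc n-d..<n}. tw (st y))"
      proof -
        have "n - d = Suc n - d" using False by auto
        then show ?thesis by simp
      qed
      have sw: "(\<Sum>t\<in>tAl d n. tw t) \<le> 13/5"
      proof (cases "n = 0")
        case True
        then have "tAl d n = {1}" unfolding tAl_def by auto
        then show ?thesis by (simp add: tw_def)
      next
        case False
        then have "tAl d n = {0,2}" using \<open>\<not> d \<le> n\<close> unfolding tAl_def by auto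
        then show ?thesis by (simp add: tw_def)
      qed
      have "(\<Sum>t\<in>tAl d n. ?P (st(n:=t)) (Suc n) * ?W (st(n:=t)) (Suc n))
          = ?P st n * ?W st n * (\<Sum>t\<in>tAl d n. tw t)"
        unfolding Pnew Wnew Wold by (simp add: sum_distrib_right algebra_simps)
      also have "\<dots> \<le> ?P st n * ?W st n * (13/5)"
        by (intro mult_left_mono sw mult_nonneg_nonneg P0) (simp add: Wold R0)
      finally show ?thesis by (simp add: mult.commute)
    qed
  qed
  have "(\<Sum>st\<in>PiE {..<Suc n} (tAl d). ?P st (Suc n) * ?W st (Suc n))
      \<le> (\<Sum>st\<in>PiE {..<n} (tAl d). 13/5 * (?P st n * ?W st n))"
    unfolding eq by (rule sum_mono) (rule key)
  also have "\<dots> = 13/5 * (\<Sum>st\<in>PiE {..<n} (tAl d). ?P st n * ?W st n)"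
    by (simp add: sum_distrib_left)
  also have "\<dots> \<le> 13/5 * (13/5)^n" using Suc.IH by simp
  finally show ?case by simp
qed

lemma transfer_bound':
  fixes r :: real
  assumes r0: "0 \<le> r" and r1: "r \<le> 6181/10000" and d: "1 \<le> d"
  shows "(\<Sum>st\<in>PiE {..<n} (tAl d). (\<Prod>x\<in>{d..<n}. r ^ tc (st (x-d)) (st x))) \<le> (13/5)^n"
proof -
  have "(\<Sum>st\<in>PiE {..<n} (tAl d). (\<Prod>x\<in>{d..<n}. r ^ tc (st (x-d)) (st x)))
     \<le> (\<Sum>st\<in>PiE {..<n} (tAl d). (\<Prod>x\<in>{d..<n}. r ^ tc (st (x-d)) (st x)) * (\<Prod>y\<in>{n-d..<n}. tw (st y)))"
  proof (rule sum_mono)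
    fix st
    have "1 \<le> (\<Prod>y\<in>{n-d..<n}. tw (st y))" using tw_ge1 by (intro prod_ge_1) auto
    moreover have "0 \<le> (\<Prod>x\<in>{d..<n}. r ^ tc (st (x-d)) (st x))" using r0 by (intro prod_nonneg) auto
    ultimately show "(\<Prod>x\<in>{d..<n}. r ^ tc (st (x-d)) (st x))
       \<le> (\<Prod>x\<in>{d..<n}. r ^ tc (st (x-d)) (st x)) * (\<Prod>y\<in>{n-d..<n}. tw (st y))"
      by (simp add: mult_le_cancel_left1)
  qed
  also have "\<dots> \<le> (13/5)^n" by (rule transfer_bound[OF assms])
  finally show ?thesis .
qed


definition nsum :: "nat set \<Rightarrow> nat set" where
  "nsum A = {a + b | a b. a \<in> A \<and> b \<in> A}"

definition calAn :: "nat \<Rightarrow> nat set set" where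
  "calAn k = {A. A \<subseteq> {..<k} \<and> 0 \<in> A \<and> k \<notin> nsum A}"

definition sN :: "nat \<Rightarrow> nat set \<Rightarrow> nat" where
  "sN k A = card (nsum A \<inter> {..k})"

lemma nsumI: "a \<in> A \<Longrightarrow> b \<in> A \<Longrightarrow> a + b \<in> nsum A"
  unfolding nsum_def by blast

lemma calAn_finite: "finite (calAn k)"
  by (rule finite_subset[of _ "Pow {..<k}"]) (auto simp: calAn_def)

lemma calAn_sub: "A \<in> calAn k \<Longrightarrow> A \<subseteq> nsum A \<inter> {..k}"
  unfolding calAn_def using nsumI[of 0 A] by force

lemma calAn_card_le: "A \<in> calAn k \<Longrightarrow> card A \<le> sN k A"
  unfolding sN_def by (rule card_mono) (auto dest: calAn_sub)

lemma calAn_pair: "A \<in> calAn k \<Longrightarrow> a \<in> A \<Longrightarrow> k - a \<in> A \<Longrightarrow> False"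
  unfolding calAn_def using nsumI[of a A "k-a"] by auto

definition stA :: "nat \<Rightarrow> nat set \<Rightarrow> nat \<Rightarrow> nat" where
  "stA k A x = (if x \<in> A then 1 else if k - x \<in> A then 2 else 0)"

definition stR :: "nat \<Rightarrow> nat set \<Rightarrow> nat \<Rightarrow> nat" where
  "stR k A = restrict (stA k A) {..<(k+1) div 2}"

lemma cost_le:
  assumes A: "A \<in> calAn k" and d1: "1 \<le> d" and dA: "d \<in> A"
  shows "(\<Sum>x\<in>{d..<(k+1) div 2}. tc (stA k A (x-d)) (stA k A x)) \<le> sN k A - card A"
proof -
  let ?N = "(k+1) div 2"
  define X1 where "X1 = {x\<in>{d..<?N}. x - d \<in> A \<and> x \<notin> A}"
  define X2 where "X2 = {x\<in>{d..<?N}. x \<notin> A \<and> k - x \<in> A \<and> k - x + d \<notin> A}"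
  have Ak: "A \<subseteq> {..<k}" "0 \<in> A" "k \<notin> nsum A" using A unfolding calAn_def by auto
  have half: "2 * x < k" if "x < ?N" for x using that by linarith
  have tc_eq: "tc (stA k A (x-d)) (stA k A x) = (if x \<in> X1 then 1 else 0) + (if x \<in> X2 then 1 else 0)"
    if x: "x \<in> {d..<?N}" for x
  proof -
    have hx: "2 * x < k" using x half by auto
    have nb: "\<not> (x - d \<in> A \<and> k - (x - d) \<in> A)" using calAn_pair[OF A] by blast
    have nb2: "\<not> (x \<in> A \<and> k - x \<in> A)" using calAn_pair[OF A] by blast
    have e: "k - (x - d) = k - x + d" using x hx by auto
    show ?thesis using x nb nb2 unfolding tc_def stA_def X1_def X2_def e by auto
  qed
  have "(\<Sum>x\<in>{d..<?N}. tc (stA k A (x-d)) (stA k A x))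
     = (\<Sum>x\<in>{d..<?N}. (if x \<in> X1 then 1 else 0) + (if x \<in> X2 then 1 else 0))"
    by (rule sum.cong) (auto simp: tc_eq)
  also have "\<dots> = card X1 + card X2"
    unfolding sum.distrib by (simp add: X1_def X2_def sum.If_cases Int_def)
  also have "\<dots> = card (X1 \<union> (\<lambda>x. k - x + d) ` X2)"
  proof -
    have inj: "inj_on (\<lambda>x. k - x + d) X2" unfolding X2_def inj_on_def using half by auto
    have disj: "X1 \<inter> (\<lambda>x. k - x + d) ` X2 = {}" unfolding X1_def X2_def using half by force
    have "finite X1" "finite X2" unfolding X1_def X2_def by auto
    then show ?thesis using card_Un_disjoint[OF _ _ disj] card_image[OF inj] by auto
  qed
  also have "\<dots> \<le> card ((nsum A \<inter> {..k}) - A)"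
  proof (rule card_mono)
    show "finite ((nsum A \<inter> {..k}) - A)" by auto
    show "X1 \<union> (\<lambda>x. k - x + d) ` X2 \<subseteq> nsum A \<inter> {..k} - A"
    proof
      fix y assume "y \<in> X1 \<union> (\<lambda>x. k - x + d) ` X2"
      then show "y \<in> nsum A \<inter> {..k} - A"
      proof
        assume y: "y \<in> X1"
        then have "y = (y - d) + d" "y - d \<in> A" "y \<notin> A" "2 * y < k" unfolding X1_def using half by auto
        then show ?thesis using nsumI[OF _ dA, of "y-d"] by auto
      next
        assume "y \<in> (\<lambda>x. k - x + d) ` X2"
        then obtain x where x: "x \<in> X2" "y = k - x + d" by auto
        then have "k - x \<in> A" "y \<notin> A" "x \<ge> d" "2 * x < k" unfolding X2_def using half by auto
        then show ?thesis using nsumI[OF _ dA, of "k-x"] x(2) by auto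
      qed
    qed
  qed
  also have "\<dots> = sN k A - card A"
    unfolding sN_def using calAn_sub[OF A] finite_subset[OF calAn_sub[OF A]] by (subst card_Diff_subset) auto
  finally show ?thesis .
qed

lemma calAn_mem_iff:
  assumes A: "A \<in> calAn k"
  shows "y \<in> A \<longleftrightarrow> y < k \<and> ((2*y < k \<and> stA k A y = 1) \<or> (2*y > k \<and> stA k A (k-y) = 2))"
proof -
  have Ak: "A \<subseteq> {..<k}" using A unfolding calAn_def by auto
  have p: "\<And>a. a \<in> A \<Longrightarrow> k - a \<in> A \<Longrightarrow> False" using calAn_pair[OF A] by blast
  show ?thesis
  proof (cases "2*y < k")
    case True then show ?thesis using Ak by (auto simp: stA_def)
  next
    case False
    show ?thesis
    proof (cases "2*y = k")
      case True
      then show ?thesis using p[of y] by (auto simp: stA_def)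
    next
      case False2: False
      have "k - (k - y) = y" if "y < k" using that by auto
      then show ?thesis using False False2 Ak p[of "k-y"] by (auto simp: stA_def)
    qed
  qed
qed

lemma stR_inj: "inj_on (stR k) (calAn k)"
proof (rule inj_onI)
  fix A B assume A: "A \<in> calAn k" and B: "B \<in> calAn k" and e: "stR k A = stR k B"
  have e2: "stA k A x = stA k B x" if "x < (k+1) div 2" for x
    using fun_cong[OF e, of x] that unfolding stR_def by auto
  show "A = B"
  proof (intro set_eqI)
    fix y
    have h1: "2*y < k \<Longrightarrow> y < (k+1) div 2" by linarith
    have h2: "2*y > k \<Longrightarrow> y < k \<Longrightarrow> k - y < (k+1) div 2" by linarith
    show "y \<in> A \<longleftrightarrow> y \<in> B"
      unfolding calAn_mem_iff[OF A, of y] calAn_mem_iff[OF B, of y]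
      using e2[OF h1] e2[OF h2] by auto
  qed
qed

lemma calAn_weight_bound:
  fixes q :: real
  assumes q0: "0 \<le> q" and q1: "q \<le> 6181/10000"
  shows "(\<Sum>A\<in>calAn k. q ^ (sN k A - card A)) \<le> 1 + real k * (13/5) ^ ((k+1) div 2)"
proof -
  let ?N = "(k+1) div 2"
  let ?f = "\<lambda>A. q ^ (sN k A - card A)"
  define g where "g A = (if A = {0} then 0 else Min (A - {0}))" for A :: "nat set"
  have gprop: "1 \<le> g A \<and> g A < k \<and> g A \<in> A \<and> (\<forall>x. 1 \<le> x \<and> x < g A \<longrightarrow> x \<notin> A)"
    if A: "A \<in> calAn k" and ne: "A \<noteq> {0}" for A
  proof -
    have Ak: "A \<subseteq> {..<k}" "0 \<in> A" using A unfolding calAn_def by auto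
    have fin: "finite (A - {0})" using Ak by (auto intro: finite_subset)
    have nonempty: "A - {0} \<noteq> {}" using Ak ne by auto
    have m: "Min (A - {0}) \<in> A - {0}" using Min_in[OF fin nonempty] .
    have "\<forall>x. 1 \<le> x \<and> x < Min (A - {0}) \<longrightarrow> x \<notin> A"
      using Min_le[OF fin] by fastforce
    then show ?thesis using m Ak ne unfolding g_def by auto
  qed
  have gimg: "g ` calAn k \<subseteq> {..<k}"
  proof
    fix d assume "d \<in> g ` calAn k"
    then obtain A where A: "A \<in> calAn k" "d = g A" by auto
    show "d \<in> {..<k}"
    proof (cases "A = {0}")
      case True
      then have "k \<noteq> 0" using A unfolding calAn_def by auto
      then show ?thesis using A True unfolding g_def by auto
    next
      case False then show ?thesis using gprop[OF A(1) False] A by auto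
    qed
  qed
  have q1': "q \<le> 1" using q1 by simp
  have fpos: "0 \<le> ?f A" for A using q0 by simp
  have "(\<Sum>A\<in>calAn k. ?f A) = (\<Sum>d\<in>{..<k}. \<Sum>A\<in>{A\<in>calAn k. g A = d}. ?f A)"
    by (rule sum.group[symmetric]) (auto simp: calAn_finite gimg)
  also have "\<dots> \<le> (\<Sum>d\<in>{..<k}. if d = 0 then 1 else (13/5) ^ ?N)"
  proof (rule sum_mono)
    fix d assume "d \<in> {..<k}"
    show "(\<Sum>A\<in>{A\<in>calAn k. g A = d}. ?f A) \<le> (if d = 0 then 1 else (13/5) ^ ?N)"
    proof (cases "d = 0")
      case True
      have sub: "{A\<in>calAn k. g A = d} \<subseteq> {{0}}" using gprop True by fastforce
      have "(\<Sum>A\<in>{A\<in>calAn k. g A = d}. ?f A) \<le> (\<Sum>A\<in>{{0}}. ?f A)"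
        by (rule sum_mono2) (use sub q0 in auto)
      also have "\<dots> \<le> 1" using q0 q1' by (simp add: power_le_one)
      finally show ?thesis using True by simp
    next
      case False
      let ?G = "{A\<in>calAn k. g A = d}"
      have d1: "1 \<le> d" using False by simp
      have "(\<Sum>A\<in>?G. ?f A) \<le> (\<Sum>A\<in>?G. \<Prod>x\<in>{d..<?N}. q ^ tc (stR k A (x-d)) (stR k A x))"
      proof (rule sum_mono)
        fix A assume A: "A \<in> ?G"
        then have ne: "A \<noteq> {0}" using False unfolding g_def by auto
        have dA: "d \<in> A" using gprop[OF _ ne] A by auto
        have "(\<Prod>x\<in>{d..<?N}. q ^ tc (stR k A (x-d)) (stR k A x))
            = (\<Prod>x\<in>{d..<?N}. q ^ tc (stA k A (x-d)) (stA k A x))"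
          by (rule prod.cong) (auto simp: stR_def)
        also have "\<dots> = q ^ (\<Sum>x\<in>{d..<?N}. tc (stA k A (x-d)) (stA k A x))"
          by (simp add: power_sum)
        also have "\<dots> \<ge> q ^ (sN k A - card A)"
          by (rule power_decreasing[OF cost_le[of A k d] q0 q1']) (use A d1 dA in auto)
        finally show "?f A \<le> (\<Prod>x\<in>{d..<?N}. q ^ tc (stR k A (x-d)) (stR k A x))" .
      qed
      also have "\<dots> = (\<Sum>st\<in>stR k ` ?G. \<Prod>x\<in>{d..<?N}. q ^ tc (st (x-d)) (st x))"
        by (rule sum.reindex[symmetric, unfolded comp_def]) (rule inj_on_subset[OF stR_inj], auto)
      also have "\<dots> \<le> (\<Sum>st\<in>PiE {..<?N} (tAl d). \<Prod>x\<in>{d..<?N}. q ^ tc (st (x-d)) (st x))"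
      proof (rule sum_mono2)
        show "finite (PiE {..<?N} (tAl d))" by (rule finite_PiE) (auto simp: tAl_finite)
        show "stR k ` ?G \<subseteq> PiE {..<?N} (tAl d)"
        proof
          fix st assume "st \<in> stR k ` ?G"
          then obtain A where A: "A \<in> calAn k" "g A = d" "st = stR k A" by auto
          then have ne: "A \<noteq> {0}" using False unfolding g_def by auto
          have gp: "\<forall>x. 1 \<le> x \<and> x < d \<longrightarrow> x \<notin> A" using gprop[OF A(1) ne] A(2) by auto
          have z: "0 \<in> A" using A unfolding calAn_def by auto
          show "st \<in> PiE {..<?N} (tAl d)"
            unfolding A(3) stR_def using gp z by (auto simp: tAl_def stA_def)
        qed
        show "0 \<le> (\<Prod>x\<in>{d..<?N}. q ^ tc (st (x-d)) (st x))" for st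
          using q0 by (intro prod_nonneg) auto
      qed
      also have "\<dots> \<le> (13/5)^?N" by (rule transfer_bound'[OF q0 q1 d1])
      finally show ?thesis using False by simp
    qed
  qed
  also have "\<dots> \<le> 1 + real k * (13/5) ^ ?N"
  proof (cases k)
    case 0 then show ?thesis by simp
  next
    case (Suc k')
    have "(\<Sum>d\<in>{..<k}. if d = 0 then 1 else (13/5::real) ^ ?N) \<le> (\<Sum>d\<in>{..<k}. (if d = 0 then 1 else 0) + (13/5::real) ^ ?N)"
      by (rule sum_mono) auto
    also have "\<dots> = 1 + real k * (13/5) ^ ?N" using Suc by (simp add: sum.distrib)
    finally show ?thesis .
  qed
  finally show ?thesis .
qed


lemma summable_n_times_power:
  fixes x :: real
  assumes x0: "0 \<le> x" and x1: "x < 1"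
  shows "summable (\<lambda>n. real n * x ^ n)"
proof (rule summable_ratio_test[where c = "(1 + x) / 2" and N = "nat \<lceil>2 / (1 - x)\<rceil>"])
  show "(1 + x) / 2 < 1" using x1 by simp
  fix n assume n: "n \<ge> nat \<lceil>2 / (1 - x)\<rceil>"
  then have "real n \<ge> 2 / (1 - x)" by linarith
  then have "real n * (1 - x) \<ge> 2" using x1 by (simp add: field_simps)
  then have h: "(real n + 1) * x \<le> (1 + x) / 2 * real n" using x0 x1 by (simp add: algebra_simps)
  have "norm (real (Suc n) * x ^ Suc n) = ((real n + 1) * x) * x ^ n" using x0 by (simp add: algebra_simps)
  also have "\<dots> \<le> ((1 + x) / 2 * real n) * x ^ n" by (rule mult_right_mono[OF h]) (use x0 in simp)
  also have "\<dots> = (1 + x) / 2 * norm (real n * x ^ n)" using x0 by simp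
  finally show "norm (real (Suc n) * x ^ Suc n) \<le> (1 + x) / 2 * norm (real n * x ^ n)" .
qed

lemma phi_facts:
  defines "\<phi> \<equiv> (1 + sqrt 5) / 2"
  shows "\<phi> > 1" "\<phi>^2 = \<phi> + 1" "inverse \<phi> \<le> 6181/10000" "(13/5) * inverse \<phi> ^ 2 < 1"
    "inverse \<phi> > 0"
proof -
  have s5: "sqrt 5 > 2236/1000"
    by (rule real_less_rsqrt) (simp add: power2_eq_square)
  show "\<phi> > 1" unfolding \<phi>_def using s5 by simp
  show "\<phi>^2 = \<phi> + 1" unfolding \<phi>_def by (simp add: power2_eq_square field_simps)
  have p: "\<phi> \<ge> 1618/1000" unfolding \<phi>_def using s5 by simp
  then show "inverse \<phi> \<le> 6181/10000"
  proof -
    have "inverse \<phi> \<le> inverse (1618/1000)" using p by (intro le_imp_inverse_le) auto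
    then show ?thesis by simp
  qed
  have "\<phi>^2 \<ge> (1618/1000)^2" using p by (intro power_mono) auto
  then have "\<phi>^2 > 13/5" by (simp add: power2_eq_square)
  then show "(13/5) * inverse \<phi> ^ 2 < 1" using p by (simp add: power_inverse field_simps)
  show "inverse \<phi> > 0" using p by simp
qed

lemma nsum_int: "sumset (int ` A) = int ` nsum A"
  unfolding sumset_def nsum_def by force

lemma calA_eq: "calA k = (\<lambda>A. int ` A) ` calAn k"
proof (intro set_eqI iffI)
  fix B assume B: "B \<in> calA k"
  then have Bs: "B \<subseteq> {0..int k - 1}" "0 \<in> B" "int k \<notin> sumset B" unfolding calA_def by auto
  have "int ` (nat ` B) = (\<lambda>x. x) ` B" unfolding image_image by (rule image_cong) (use Bs(1) in auto)
  then have e: "B = int ` (nat ` B)" by simp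
  have s1: "nat ` B \<subseteq> {..<k}"
  proof
    fix x assume "x \<in> nat ` B"
    then obtain y where y: "y \<in> B" "x = nat y" by auto
    then have "0 \<le> y" "y \<le> int k - 1" using Bs(1) by auto
    then show "x \<in> {..<k}" using y by auto
  qed
  have s2: "0 \<in> nat ` B" using Bs(2) by (auto intro: image_eqI[where x=0])
  have s3: "k \<notin> nsum (nat ` B)"
  proof
    assume "k \<in> nsum (nat ` B)"
    then have "int k \<in> int ` nsum (nat ` B)" by blast
    then have "int k \<in> sumset B" using nsum_int[of "nat ` B"] e by simp
    then show False using Bs(3) by simp
  qed
  have "nat ` B \<in> calAn k" unfolding calAn_def using s1 s2 s3 by blast
  then show "B \<in> (\<lambda>A. int ` A) ` calAn k" using e by blast
next
  fix B assume "B \<in> (\<lambda>A. int ` A) ` calAn k"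
  then obtain A where A: "A \<in> calAn k" "B = int ` A" by auto
  then have As: "A \<subseteq> {..<k}" "0 \<in> A" "k \<notin> nsum A" unfolding calAn_def by auto
  have "B \<subseteq> {0..int k - 1}" using As(1) A(2) by auto
  moreover have "0 \<in> B" using As(2) A(2) by force
  moreover have "int k \<notin> sumset B" using As(3) A(2) nsum_int[of A] by auto
  ultimately show "B \<in> calA k" unfolding calA_def by blast
qed

lemma sumset_int_card: "card (sumset (int ` A) \<inter> {0..int k}) = sN k A"
proof -
  have "sumset (int ` A) \<inter> {0..int k} = int ` (nsum A \<inter> {..k})"
    unfolding nsum_int by auto
  then show ?thesis unfolding sN_def by (simp add: card_image)
qed

lemma powr_nat_exp:
  fixes \<phi> :: real
  assumes "\<phi> > 0" "a \<le> s"
  shows "\<phi> powr (- real s + real a - real k - 1) = inverse \<phi> ^ (s - a) * inverse \<phi> ^ (k+1)"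
proof -
  have e: "- real s + real a - real k - 1 = - real (s - a + (k+1))" using assms(2) by (simp add: of_nat_diff)
  have "\<phi> powr (- real (s - a + (k+1))) = inverse (\<phi> powr real (s - a + (k+1)))"
    by (rule powr_minus)
  also have "inverse (\<phi> powr real (s - a + (k+1))) = inverse (\<phi> ^ (s - a + (k+1)))"
    using powr_realpow[OF assms(1), of "s - a + (k+1)"] by (simp only:)
  also have "\<dots> = inverse \<phi> ^ (s - a) * inverse \<phi> ^ (k+1)"
    by (simp add: power_add power_inverse)
  finally show ?thesis unfolding e .
qed

lemma T_eq:
  fixes \<phi> :: real
  assumes "\<phi> > 0"
  shows "(\<Sum>A\<in>calA k. \<phi> powr (- real (card (sumset A \<inter> {0..int k})) + real (card A) - real k - 1))
       = (\<Sum>A\<in>calAn k. inverse \<phi> ^ (sN k A - card A) * inverse \<phi> ^ (k+1))"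
proof -
  have inj: "inj_on (\<lambda>A. int ` A) (calAn k)" by (rule inj_onI) (simp add: inj_image_eq_iff[OF inj_of_nat])
  let ?f = "\<lambda>A. \<phi> powr (- real (card (sumset A \<inter> {0..int k})) + real (card A) - real k - 1)"
  have "(\<Sum>A\<in>calA k. ?f A) = (\<Sum>A\<in>calAn k. ?f (int ` A))"
    unfolding calA_eq by (rule sum.reindex[OF inj, unfolded comp_def])
  also have "\<dots> = (\<Sum>A\<in>calAn k. inverse \<phi> ^ (sN k A - card A) * inverse \<phi> ^ (k+1))"
  proof (rule sum.cong[OF refl])
    fix A assume A: "A \<in> calAn k"
    have c: "card (int ` A) = card A" by (simp add: card_image)
    show "?f (int ` A) = inverse \<phi> ^ (sN k A - card A) * inverse \<phi> ^ (k+1)"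
      unfolding sumset_int_card c by (rule powr_nat_exp[OF assms calAn_card_le[OF A]])
  qed
  finally show ?thesis .
qed

lemma Tn_bound:
  fixes q :: real
  assumes q0: "0 \<le> q" and q1: "q \<le> 6181/10000"
  shows "(\<Sum>A\<in>calAn k. q ^ (sN k A - card A) * q ^ (k+1)) \<le> q ^ (k+1) + real k * sqrt ((13/5) * q^2) ^ k"
proof -
  let ?N = "(k+1) div 2"
  let ?b = "(13/5) * q^2"
  have "(\<Sum>A\<in>calAn k. q ^ (sN k A - card A) * q ^ (k+1)) = (\<Sum>A\<in>calAn k. q ^ (sN k A - card A)) * q ^ (k+1)"
    by (simp add: sum_distrib_right)
  also have "\<dots> \<le> (1 + real k * (13/5) ^ ?N) * q ^ (k+1)"
    by (rule mult_right_mono[OF calAn_weight_bound[OF q0 q1]]) (use q0 in simp)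
  also have "\<dots> = q ^ (k+1) + real k * ((13/5) ^ ?N * q ^ (k+1))" by (simp add: algebra_simps)
  also have "(13/5) ^ ?N * q ^ (k+1) \<le> sqrt ?b ^ k"
  proof -
    have "q ^ (k+1) \<le> q ^ (2 * ?N)" by (rule power_decreasing) (use q0 q1 in auto)
    then have "(13/5) ^ ?N * q ^ (k+1) \<le> (13/5) ^ ?N * q ^ (2 * ?N)" by (simp add: mult_left_mono)
    also have "\<dots> = ?b ^ ?N" by (simp add: power_mult power_mult_distrib[symmetric])
    also have "\<dots> = sqrt ?b ^ (2 * ?N)" using q0 by (simp add: power_mult)
    also have "\<dots> \<le> sqrt ?b ^ k"
    proof (rule power_decreasing)
      show "k \<le> 2 * ?N" by linarith
      show "0 \<le> sqrt ?b" using q0 by simp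
      have "q^2 \<le> (6181/10000)^2" using q0 q1 by (intro power_mono) auto
      then have "?b \<le> 1" by (simp add: power2_eq_square)
      then show "sqrt ?b \<le> 1" by simp
    qed
    finally show ?thesis .
  qed
  then have "q ^ (k+1) + real k * ((13/5) ^ ?N * q ^ (k+1)) \<le> q ^ (k+1) + real k * sqrt ?b ^ k"
    by (simp add: mult_left_mono)
  finally show ?thesis .
qed

lemma T_summable:
  defines "\<phi> \<equiv> (1 + sqrt 5) / 2"
  defines "T \<equiv> (\<lambda>k::nat. \<Sum>A\<in>calA k.
              \<phi> powr (- real (card (sumset A \<inter> {0..int k})) + real (card A) - real k - 1))"
  shows "summable T" "\<And>k. T k \<ge> 0"
    "\<And>k. T k = (\<Sum>A\<in>calAn k. inverse \<phi> ^ (sN k A - card A) * inverse \<phi> ^ (k+1))"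
proof -
  note pf = phi_facts[folded \<phi>_def]
  let ?q = "inverse \<phi>"
  have q0: "0 \<le> ?q" using pf by simp
  show Teq: "T k = (\<Sum>A\<in>calAn k. ?q ^ (sN k A - card A) * ?q ^ (k+1))" for k
    unfolding T_def by (rule T_eq) (use pf in simp)
  show "T k \<ge> 0" for k unfolding Teq using q0 by (intro sum_nonneg) simp
  let ?c = "sqrt ((13/5) * ?q^2)"
  have c0: "0 \<le> ?c" by simp
  have c1: "?c < 1" using pf(4) by simp
  have "summable (\<lambda>k. ?q ^ (k+1) + real k * ?c ^ k)"
  proof (rule summable_add)
    show "summable (\<lambda>k. ?q ^ (k+1))"
      using summable_geometric[of ?q] pf by (simp add: summable_mult)
    show "summable (\<lambda>k. real k * ?c ^ k)" by (rule summable_n_times_power[OF c0 c1])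
  qed
  then show "summable T"
  proof (rule summable_comparison_test[rotated], intro exI allI impI)
    fix k
    have "0 \<le> T k" unfolding Teq using q0 by (intro sum_nonneg) simp
    then show "norm (T k) \<le> ?q ^ (k+1) + real k * ?c ^ k"
      using Tn_bound[OF q0 pf(3), of k] unfolding Teq by simp
  qed
qed


definition mkS :: "nat \<Rightarrow> nat set \<Rightarrow> nat set \<Rightarrow> nat set" where
  "mkS m A B = {0} \<union> (\<lambda>a. m + a) ` A \<union> (\<lambda>b. 2*m + b) ` B \<union> {3*m..}"

definition validT :: "nat \<Rightarrow> nat set \<Rightarrow> nat set \<Rightarrow> bool" where
  "validT m A B \<longleftrightarrow> 2 \<le> m \<and> A \<subseteq> {..<m} \<and> 0 \<in> A \<and> B \<subseteq> {..<m} \<and>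
     (\<forall>a\<in>A. \<forall>b\<in>A. a + b < m \<longrightarrow> a + b \<in> B)"

lemma mkS_mem:
  assumes "A \<subseteq> {..<m}" "B \<subseteq> {..<m}"
  shows "x \<in> mkS m A B \<longleftrightarrow> x = 0 \<or> (m \<le> x \<and> x < 2*m \<and> x - m \<in> A)
     \<or> (2*m \<le> x \<and> x < 3*m \<and> x - 2*m \<in> B) \<or> 3*m \<le> x"
proof
  assume "x \<in> mkS m A B"
  then show "x = 0 \<or> (m \<le> x \<and> x < 2*m \<and> x - m \<in> A)
     \<or> (2*m \<le> x \<and> x < 3*m \<and> x - 2*m \<in> B) \<or> 3*m \<le> x"
    unfolding mkS_def using assms by auto
next
  assume h: "x = 0 \<or> (m \<le> x \<and> x < 2*m \<and> x - m \<in> A)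
     \<or> (2*m \<le> x \<and> x < 3*m \<and> x - 2*m \<in> B) \<or> 3*m \<le> x"
  show "x \<in> mkS m A B"
  proof -
    { assume "m \<le> x" "x - m \<in> A"
      then have "x \<in> (\<lambda>a. m + a) ` A" by (intro image_eqI[where x="x-m"]) auto }
    moreover
    { assume "2*m \<le> x" "x - 2*m \<in> B"
      then have "x \<in> (\<lambda>b. 2*m + b) ` B" by (intro image_eqI[where x="x-2*m"]) auto }
    ultimately show ?thesis using h unfolding mkS_def by auto
  qed
qed

lemma mkS_gaps:
  assumes v: "validT m A B"
  shows "UNIV - mkS m A B = {1..<m} \<union> (\<lambda>a. m + a) ` ({..<m} - A) \<union> (\<lambda>b. 2*m + b) ` ({..<m} - B)"
proof -
  have s: "A \<subseteq> {..<m}" "B \<subseteq> {..<m}" using v unfolding validT_def by auto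
  show ?thesis
  proof (intro set_eqI iffI)
    fix x assume "x \<in> UNIV - mkS m A B"
    then have nx: "\<not> (x = 0 \<or> (m \<le> x \<and> x < 2*m \<and> x - m \<in> A)
     \<or> (2*m \<le> x \<and> x < 3*m \<and> x - 2*m \<in> B) \<or> 3*m \<le> x)" using mkS_mem[OF s] by blast
    show "x \<in> {1..<m} \<union> (\<lambda>a. m + a) ` ({..<m} - A) \<union> (\<lambda>b. 2*m + b) ` ({..<m} - B)"
    proof (cases "x < m")
      case True then show ?thesis using nx by auto
    next
      case False
      show ?thesis
      proof (cases "x < 2*m")
        case True
        then have "x \<in> (\<lambda>a. m + a) ` ({..<m} - A)" using nx False by (intro image_eqI[where x="x-m"]) auto
        then show ?thesis by blast
      next
        case False2: False
        then have "x \<in> (\<lambda>b. 2*m + b) ` ({..<m} - B)" using nx False by (intro image_eqI[where x="x-2*m"]) auto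
        then show ?thesis by blast
      qed
    qed
  next
    fix x assume "x \<in> {1..<m} \<union> (\<lambda>a. m + a) ` ({..<m} - A) \<union> (\<lambda>b. 2*m + b) ` ({..<m} - B)"
    then show "x \<in> UNIV - mkS m A B" using mkS_mem[OF s, of x] by auto
  qed
qed

lemma mkS_genus:
  assumes v: "validT m A B"
  shows "genus (mkS m A B) = (m - 1) + (m - card A) + (m - card B)"
proof -
  have s: "A \<subseteq> {..<m}" "B \<subseteq> {..<m}" using v unfolding validT_def by auto
  have fA: "finite A" "finite B" using s by (auto intro: finite_subset)
  have d1: "{1..<m} \<inter> ((\<lambda>a. m + a) ` ({..<m} - A) \<union> (\<lambda>b. 2*m + b) ` ({..<m} - B)) = {}" by auto
  have d2: "(\<lambda>a. m + a) ` ({..<m} - A) \<inter> (\<lambda>b. 2*m + b) ` ({..<m} - B) = {}" by auto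
  have fin1: "finite {1..<m}" "finite ((\<lambda>a. m + a) ` ({..<m} - A))" "finite ((\<lambda>b. 2*m + b) ` ({..<m} - B))" by auto
  have c1: "card ((\<lambda>a. m + a) ` ({..<m} - A)) = m - card A"
    by (subst card_image) (auto simp: card_Diff_subset fA s)
  have c2: "card ((\<lambda>b. 2*m + b) ` ({..<m} - B)) = m - card B"
    by (subst card_image) (auto simp: card_Diff_subset fA s)
  have c3: "card ((\<lambda>a. m + a) ` ({..<m} - A) \<union> (\<lambda>b. 2*m + b) ` ({..<m} - B)) = (m - card A) + (m - card B)"
    using card_Un_disjoint[OF fin1(2,3) d2] c1 c2 by simp
  have c4: "card ({1..<m} \<union> ((\<lambda>a. m + a) ` ({..<m} - A) \<union> (\<lambda>b. 2*m + b) ` ({..<m} - B))) = (m - 1) + ((m - card A) + (m - card B))"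
    using card_Un_disjoint[OF fin1(1) _ d1] c3 by simp
  have "genus (mkS m A B) = card ({1..<m} \<union> ((\<lambda>a. m + a) ` ({..<m} - A) \<union> (\<lambda>b. 2*m + b) ` ({..<m} - B)))"
    unfolding genus_def mkS_gaps[OF v] by (simp add: Un_assoc)
  then show ?thesis using c4 by simp
qed

lemma mkS_semigroup:
  assumes v: "validT m A B"
  shows "numerical_semigroup (mkS m A B)"
proof -
  have s: "A \<subseteq> {..<m}" "B \<subseteq> {..<m}" and m2: "2 \<le> m" and cl: "\<forall>a\<in>A. \<forall>b\<in>A. a + b < m \<longrightarrow> a + b \<in> B"
    using v unfolding validT_def by auto
  have fin: "finite (UNIV - mkS m A B)"
    unfolding mkS_gaps[OF v] by auto
  have add: "x + y \<in> mkS m A B" if x: "x \<in> mkS m A B" and y: "y \<in> mkS m A B" for x y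
  proof -
    note xm = x[unfolded mkS_mem[OF s]] and ym = y[unfolded mkS_mem[OF s]]
    show ?thesis
    proof (cases "x = 0 \<or> y = 0")
      case True then show ?thesis using x y by auto
    next
      case False
      then have "m \<le> x" "m \<le> y" using xm ym m2 by auto
      show ?thesis
      proof (cases "x < 2*m \<and> y < 2*m \<and> x + y < 3*m")
        case True
        then have "x - m \<in> A" "y - m \<in> A" using xm ym False by auto
        moreover have "(x - m) + (y - m) < m" using True \<open>m \<le> x\<close> \<open>m \<le> y\<close> by auto
        ultimately have "(x - m) + (y - m) \<in> B" using cl by auto
        moreover have "x + y - 2*m = (x - m) + (y - m)" using \<open>m \<le> x\<close> \<open>m \<le> y\<close> by auto
        ultimately show ?thesis unfolding mkS_mem[OF s] using True \<open>m \<le> x\<close> \<open>m \<le> y\<close> by auto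
      next
        case False
        then have "3*m \<le> x + y" using \<open>m \<le> x\<close> \<open>m \<le> y\<close> by auto
        then show ?thesis unfolding mkS_mem[OF s] by auto
      qed
    qed
  qed
  show ?thesis unfolding numerical_semigroup_def using fin add by (auto simp: mkS_def)
qed

lemma mkS_mult:
  assumes v: "validT m A B"
  shows "multiplicity (mkS m A B) = m"
proof -
  have s: "A \<subseteq> {..<m}" "B \<subseteq> {..<m}" and m2: "2 \<le> m" and z: "0 \<in> A"
    using v unfolding validT_def by auto
  show ?thesis unfolding multiplicity_def
  proof (rule Least_equality)
    show "m \<in> mkS m A B \<and> m \<noteq> 0" using z m2 unfolding mkS_mem[OF s] by auto
    fix y assume "y \<in> mkS m A B \<and> y \<noteq> 0"
    then show "m \<le> y" unfolding mkS_mem[OF s] by auto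
  qed
qed

lemma mkS_frob:
  assumes v: "validT m A B"
  shows "frobenius (mkS m A B) < 3 * m"
proof -
  have ne: "UNIV - mkS m A B \<noteq> {}" and fin: "finite (UNIV - mkS m A B)"
    using v unfolding mkS_gaps[OF v] validT_def by auto
  have "\<forall>x\<in>UNIV - mkS m A B. x < 3 * m" unfolding mkS_gaps[OF v] by auto
  then show ?thesis unfolding frobenius_def using Max_in[OF fin ne] by blast
qed

lemma mkS_inj:
  assumes v: "validT m A B" and v': "validT m' A' B'" and e: "mkS m A B = mkS m' A' B'"
  shows "m = m' \<and> A = A' \<and> B = B'"
proof -
  have mm: "m = m'" using mkS_mult[OF v] mkS_mult[OF v'] e by simp
  have s: "A \<subseteq> {..<m}" "B \<subseteq> {..<m}" using v unfolding validT_def by auto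
  have s': "A' \<subseteq> {..<m}" "B' \<subseteq> {..<m}" using v' mm unfolding validT_def by auto
  have "A = A'"
  proof (intro set_eqI)
    fix a
    have "(m + a \<in> mkS m A B) = (m + a \<in> mkS m A' B')" using e mm by simp
    then show "a \<in> A \<longleftrightarrow> a \<in> A'" unfolding mkS_mem[OF s] mkS_mem[OF s'] using s s' v
      by (auto simp: validT_def)
  qed
  moreover have "B = B'"
  proof (intro set_eqI)
    fix b
    have "(2*m + b \<in> mkS m A B) = (2*m + b \<in> mkS m A' B')" using e mm by simp
    then show "b \<in> B \<longleftrightarrow> b \<in> B'" unfolding mkS_mem[OF s] mkS_mem[OF s'] using s s' v
      by (auto simp: validT_def)
  qed
  ultimately show ?thesis using mm by simp
qed

lemma semigroup_is_mkS:
  assumes ns: "numerical_semigroup S" and g: "genus S \<ge> 1" and f: "frobenius S < 3 * multiplicity S"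
  shows "\<exists>m A B. validT m A B \<and> S = mkS m A B"
proof -
  have z: "0 \<in> S" and cl: "\<And>a b. a \<in> S \<Longrightarrow> b \<in> S \<Longrightarrow> a + b \<in> S" and fin: "finite (UNIV - S)"
    using ns unfolding numerical_semigroup_def by auto
  have ne: "UNIV - S \<noteq> {}"
  proof
    assume "UNIV - S = {}"
    then have "card (UNIV - S) = 0" by (simp only: card.empty)
    then show False using g unfolding genus_def by simp
  qed
  define m where "m = multiplicity S"
  have big: "x \<in> S" if "x > frobenius S" for x
    using that Max_ge[OF fin, of x] unfolding frobenius_def by force
  have ex: "\<exists>x. x \<in> S \<and> x \<noteq> 0" using big[of "Suc (frobenius S)"] by auto
  have mS: "m \<in> S" "m \<noteq> 0" using LeastI_ex[OF ex] unfolding m_def multiplicity_def by auto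
  have small: "x \<notin> S" if "0 < x" "x < m" for x
    using not_less_Least[of x "\<lambda>x. x \<in> S \<and> x \<noteq> 0"] that unfolding m_def multiplicity_def by auto
  have m2: "2 \<le> m"
  proof (rule ccontr)
    assume "\<not> 2 \<le> m"
    then have m1: "m = 1" using mS by auto
    have "n \<in> S" for n
    proof (induction n)
      case 0 show ?case using z .
    next
      case (Suc n) then show ?case using cl[OF Suc mS(1)] m1 by simp
    qed
    then show False using ne by auto
  qed
  have top: "x \<in> S" if "3 * m \<le> x" for x using big f that unfolding m_def by auto
  define A where "A = {a. a < m \<and> m + a \<in> S}"
  define B where "B = {b. b < m \<and> 2*m + b \<in> S}"
  have v: "validT m A B"
    unfolding validT_def
  proof (intro conjI ballI impI)
    show "2 \<le> m" by (rule m2)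
    show "A \<subseteq> {..<m}" "B \<subseteq> {..<m}" unfolding A_def B_def by auto
    show "0 \<in> A" unfolding A_def using mS m2 by auto
    fix a b assume "a \<in> A" "b \<in> A" "a + b < m"
    then have "a < m" "(m+a)+(m+b) \<in> S" "a + b < m" unfolding A_def B_def using cl[of "m+a" "m+b"] by auto
    moreover have "(m+a)+(m+b) = 2*m+(a+b)" by simp
    ultimately show "a + b \<in> B" unfolding B_def by auto
  qed
  have s: "A \<subseteq> {..<m}" "B \<subseteq> {..<m}" unfolding A_def B_def by auto
  have memA: "a \<in> A \<longleftrightarrow> a < m \<and> m + a \<in> S" for a unfolding A_def by simp
  have memB: "b \<in> B \<longleftrightarrow> b < m \<and> 2*m + b \<in> S" for b unfolding B_def by simp
  have "S = mkS m A B"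
  proof (intro set_eqI)
    fix x
    show "x \<in> S \<longleftrightarrow> x \<in> mkS m A B"
    proof (cases "x = 0 \<or> 3 * m \<le> x")
      case True then show ?thesis using z top unfolding mkS_mem[OF s] by auto
    next
      case False
      show ?thesis
      proof (cases "x < m")
        case True then show ?thesis using small[of x] False unfolding mkS_mem[OF s] by auto
      next
        case False2: False
        show ?thesis
        proof (cases "x < 2*m")
          case True
          then show ?thesis using False False2 unfolding mkS_mem[OF s] memA by auto
        next
          case False3: False
          then show ?thesis using False False2 unfolding mkS_mem[OF s] memB by auto
        qed
      qed
    qed
  qed
  then show ?thesis using v by blast
qed

definition triples :: "nat \<Rightarrow> (nat \<times> nat set \<times> nat set) set" where
  "triples g = {(m, A, B). validT m A B \<and> (m - 1) + (m - card A) + (m - card B) = g}"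

lemma t_count_triples:
  assumes g: "g \<ge> 1"
  shows "t_count g = card (triples g)"
proof -
  have eq: "{S. numerical_semigroup S \<and> genus S = g \<and> frobenius S < 3 * multiplicity S}
      = (\<lambda>(m, A, B). mkS m A B) ` triples g"
  proof (intro set_eqI iffI)
    fix S assume "S \<in> {S. numerical_semigroup S \<and> genus S = g \<and> frobenius S < 3 * multiplicity S}"
    then have S: "numerical_semigroup S" "genus S = g" "frobenius S < 3 * multiplicity S" by auto
    obtain m A B where v: "validT m A B" "S = mkS m A B" using semigroup_is_mkS[OF S(1) _ S(3)] S(2) g by auto
    then have "(m, A, B) \<in> triples g" using mkS_genus[OF v(1)] S(2) unfolding triples_def by auto
    then show "S \<in> (\<lambda>(m, A, B). mkS m A B) ` triples g" using v(2) by force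
  next
    fix S assume "S \<in> (\<lambda>(m, A, B). mkS m A B) ` triples g"
    then obtain m A B where v: "validT m A B" "(m - 1) + (m - card A) + (m - card B) = g" "S = mkS m A B"
      unfolding triples_def by auto
    then show "S \<in> {S. numerical_semigroup S \<and> genus S = g \<and> frobenius S < 3 * multiplicity S}"
      using mkS_semigroup[OF v(1)] mkS_genus[OF v(1)] mkS_frob[OF v(1)] mkS_mult[OF v(1)] by auto
  qed
  have inj: "inj_on (\<lambda>(m, A, B). mkS m A B) (triples g)"
  proof (rule inj_onI)
    fix x y assume x: "x \<in> triples g" and y: "y \<in> triples g"
      and e: "(\<lambda>(m, A, B). mkS m A B) x = (\<lambda>(m, A, B). mkS m A B) y"
    obtain m A B where xx: "x = (m, A, B)" by (cases x) auto
    obtain m' A' B' where yy: "y = (m', A', B')" by (cases y) auto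
    have "validT m A B" "validT m' A' B'" using x y unfolding xx yy triples_def by auto
    then show "x = y" using mkS_inj[of m A B m' A' B'] e unfolding xx yy by auto
  qed
  show ?thesis unfolding t_count_def eq by (rule card_image[OF inj])
qed


lemma fibsum: "(\<Sum>u\<in>{u. 2*u \<le> t}. (t - u) choose u) = fib (t + 1)"
proof -
  have "(\<Sum>u\<in>{u. 2*u \<le> t}. (t - u) choose u) = (\<Sum>u=0..t. (t - u) choose u)"
    by (rule sum.mono_neutral_left) auto
  also have "\<dots> = fib (t + 1)" using ne_diagonal_fib[of t] by simp
  finally show ?thesis .
qed

lemma core_identity:
  fixes E c :: nat
  shows "(\<Sum>n\<in>{..E}. \<Sum>i\<in>{..n}. (if 2*n \<le> E + i then (n choose i) * (c choose (E + i - 2*n)) else 0))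
       = (\<Sum>j\<in>{..c}. (c choose j) * fib (E + 1 - j))"
proof -
  let ?D = "{(n, i). n \<le> E \<and> i \<le> n \<and> 2*n \<le> E + i}"
  let ?Q = "{(t, u). t \<le> E \<and> 2*u \<le> t}"
  have "(\<Sum>n\<in>{..E}. \<Sum>i\<in>{..n}. (if 2*n \<le> E + i then (n choose i) * (c choose (E + i - 2*n)) else 0))
      = (\<Sum>(n,i)\<in>Sigma {..E} (\<lambda>n. {..n}). (if 2*n \<le> E + i then (n choose i) * (c choose (E + i - 2*n)) else 0))"
    by (rule sum.Sigma) auto
  also have "\<dots> = (\<Sum>(n,i)\<in>?D. (n choose i) * (c choose (E + i - 2*n)))"
    by (rule sum.mono_neutral_cong_right) (auto split: if_splits)
  also have "\<dots> = (\<Sum>(t,u)\<in>?Q. ((t - u) choose u) * (c choose (E - t)))"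
  proof (rule sum.reindex_bij_witness[of _ "\<lambda>(t,u). (t - u, t - 2*u)" "\<lambda>(n,i). (2*n - i, n - i)"])
    fix a assume a: "a \<in> ?D"
    obtain n i where ni: "a = (n, i)" by (cases a)
    show "(\<lambda>(t, u). (t - u, t - 2 * u)) ((\<lambda>(n, i). (2 * n - i, n - i)) a) = a" using a ni by auto
    show "(\<lambda>(n, i). (2 * n - i, n - i)) a \<in> ?Q" using a ni by auto
    have "(n choose i) = (n choose (n - i))" using a ni by (intro binomial_symmetric) auto
    then show "(case (\<lambda>(n, i). (2 * n - i, n - i)) a of (t, u) \<Rightarrow> ((t - u) choose u) * (c choose (E - t)))
       = (case a of (n, i) \<Rightarrow> (n choose i) * (c choose (E + i - 2 * n)))"
      using a ni by (auto simp: algebra_simps)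
  next
    fix b assume b: "b \<in> ?Q"
    obtain t u where tu: "b = (t, u)" by (cases b)
    show "(\<lambda>(n, i). (2 * n - i, n - i)) ((\<lambda>(t, u). (t - u, t - 2 * u)) b) = b" using b tu by auto
    show "(\<lambda>(t, u). (t - u, t - 2 * u)) b \<in> ?D" using b tu by auto
  qed
  also have "\<dots> = (\<Sum>t\<in>{..E}. \<Sum>u\<in>{u. 2*u \<le> t}. ((t - u) choose u) * (c choose (E - t)))"
  proof -
    have "?Q = Sigma {..E} (\<lambda>t. {u. 2*u \<le> t})" by auto
    moreover have "\<forall>t\<in>{..E}. finite {u::nat. 2*u \<le> t}" by (auto intro: finite_subset[of _ "{..E}"])
    ultimately show ?thesis by (simp add: sum.Sigma)
  qed
  also have "\<dots> = (\<Sum>t\<in>{..E}. fib (t + 1) * (c choose (E - t)))"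
    by (simp add: sum_distrib_right[symmetric] fibsum)
  also have "\<dots> = (\<Sum>j\<in>{..E}. (c choose j) * fib (E + 1 - j))"
    by (rule sum.reindex_bij_witness[of _ "\<lambda>j. E - j" "\<lambda>t. E - t"]) (auto simp: Suc_diff_le)
  also have "\<dots> = (\<Sum>j\<in>{..E + c}. (c choose j) * fib (E + 1 - j))"
    by (rule sum.mono_neutral_left) auto
  also have "\<dots> = (\<Sum>j\<in>{..c}. (c choose j) * fib (E + 1 - j))"
    by (rule sum.mono_neutral_right) auto
  finally show ?thesis .
qed

lemma C4_identity:
  fixes k a c g :: nat
  assumes k: "1 \<le> k" and a: "a \<le> k"
  shows "(\<Sum>m\<in>{k+1..g+1}. \<Sum>i\<in>{..m-1-k}. ((m-1-k) choose i) *
            (if 2*m \<le> g + a + i then c choose (g + a + i - 2*m) else 0))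
       = (\<Sum>j\<in>{..c}. (c choose j) * fib (g + a - (2*k+1+j)))"
proof (cases "2*k+2 \<le> g + a")
  case False
  have "(\<Sum>m\<in>{k+1..g+1}. \<Sum>i\<in>{..m-1-k}. ((m-1-k) choose i) *
            (if 2*m \<le> g + a + i then c choose (g + a + i - 2*m) else 0)) = 0"
    using False by (intro sum.neutral ballI) auto
  moreover have "(\<Sum>j\<in>{..c}. (c choose j) * fib (g + a - (2*k+1+j))) = 0"
  proof (intro sum.neutral ballI)
    fix j show "(c choose j) * fib (g + a - (2*k+1+j)) = 0" using False by (simp add: diff_is_0_eq')
  qed
  ultimately show ?thesis by simp
next
  case True
  define E where "E = g + a - (2*k+2)"
  have gk: "k \<le> g" using True a by simp
  have EE: "E \<le> g - k" unfolding E_def using a True by simp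
  have "(\<Sum>m\<in>{k+1..g+1}. \<Sum>i\<in>{..m-1-k}. ((m-1-k) choose i) *
            (if 2*m \<le> g + a + i then c choose (g + a + i - 2*m) else 0))
      = (\<Sum>n\<in>{..g-k}. \<Sum>i\<in>{..n}. (n choose i) *
            (if 2*(n+k+1) \<le> g + a + i then c choose (g + a + i - 2*(n+k+1)) else 0))"
  proof (rule sum.reindex_bij_witness[of _ "\<lambda>n. n + k + 1" "\<lambda>m. m - 1 - k"])
    fix m assume m: "m \<in> {k+1..g+1}"
    then have e: "m - 1 - k + k + 1 = m" by auto
    show "m - 1 - k + k + 1 = m" by (rule e)
    show "m - 1 - k \<in> {..g-k}" using m by auto
    show "(\<Sum>i\<in>{..m - 1 - k}. (m - 1 - k choose i) *
            (if 2 * (m - 1 - k + k + 1) \<le> g + a + i then c choose (g + a + i - 2 * (m - 1 - k + k + 1)) else 0)) =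
          (\<Sum>i\<in>{..m - 1 - k}. (m - 1 - k choose i) * (if 2 * m \<le> g + a + i then c choose (g + a + i - 2 * m) else 0))"
      unfolding e ..
  qed (use gk in auto)
  also have "\<dots> = (\<Sum>n\<in>{..g-k}. \<Sum>i\<in>{..n}. (if 2*n \<le> E + i then (n choose i) * (c choose (E + i - 2*n)) else 0))"
  proof (intro sum.cong refl)
    fix n i
    have "2*(n+k+1) \<le> g + a + i \<longleftrightarrow> 2*n \<le> E + i" unfolding E_def using True by auto
    moreover have "g + a + i - 2*(n+k+1) = E + i - 2*n" unfolding E_def using True by auto
    ultimately show "(n choose i) * (if 2*(n+k+1) \<le> g + a + i then c choose (g + a + i - 2*(n+k+1)) else 0)
        = (if 2*n \<le> E + i then (n choose i) * (c choose (E + i - 2*n)) else 0)" by simp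
  qed
  also have "\<dots> = (\<Sum>n\<in>{..E}. \<Sum>i\<in>{..n}. (if 2*n \<le> E + i then (n choose i) * (c choose (E + i - 2*n)) else 0))"
  proof (rule sum.mono_neutral_right)
    show "{..E} \<subseteq> {..g-k}" using EE by auto
    show "\<forall>n\<in>{..g - k} - {..E}. (\<Sum>i\<in>{..n}. (if 2*n \<le> E + i then (n choose i) * (c choose (E + i - 2*n)) else 0)) = 0"
      by (intro ballI sum.neutral) auto
  qed simp
  also have "\<dots> = (\<Sum>j\<in>{..c}. (c choose j) * fib (E + 1 - j))" by (rule core_identity)
  also have "\<dots> = (\<Sum>j\<in>{..c}. (c choose j) * fib (g + a - (2*k+1+j)))"
  proof (intro sum.cong refl)
    fix j have "E + 1 - j = g + a - (2*k+1+j)" unfolding E_def using True by auto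
    then show "(c choose j) * fib (E + 1 - j) = (c choose j) * fib (g + a - (2*k+1+j))" by simp
  qed
  finally show ?thesis .
qed


definition Am :: "nat \<Rightarrow> nat set set" where
  "Am m = {A. A \<subseteq> {..<m} \<and> 0 \<in> A}"

definition Bs :: "nat \<Rightarrow> nat set \<Rightarrow> nat \<Rightarrow> nat set set" where
  "Bs m A g = {B. B \<subseteq> {..<m} \<and> nsum A \<inter> {..<m} \<subseteq> B \<and> (m - 1) + (m - card A) + (m - card B) = g}"

lemma Am_finite: "finite (Am m)"
  by (rule finite_subset[of _ "Pow {..<m}"]) (auto simp: Am_def)

lemma Bs_finite: "finite (Bs m A g)"
  by (rule finite_subset[of _ "Pow {..<m}"]) (auto simp: Bs_def)

lemma validT_iff: "validT m A B \<longleftrightarrow> 2 \<le> m \<and> A \<in> Am m \<and> B \<in> Pow {..<m} \<and> nsum A \<inter> {..<m} \<subseteq> B"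
  unfolding validT_def Am_def nsum_def by blast

lemma card_eq_sum_group:
  assumes "finite S" "finite T" "f ` S \<subseteq> T"
  shows "card S = (\<Sum>y\<in>T. card {x\<in>S. f x = y})"
proof -
  have "card S = (\<Sum>x\<in>S. 1)" by simp
  also have "\<dots> = (\<Sum>y\<in>T. \<Sum>x\<in>{x\<in>S. f x = y}. 1)" by (rule sum.group[symmetric]) (use assms in auto)
  finally show ?thesis by simp
qed

lemma Bs_group:
  assumes m: "2 \<le> m" and A: "A \<in> Am m" and k: "1 \<le> k" "k < m"
  shows "{B\<in>Bs m A g. (if B = {..<m} then 0 else Max ({..<m} - B)) = k}
    = (if k \<notin> nsum A \<and> 2*m \<le> g + card A then
        (\<lambda>Y. ({..<k} - Y) \<union> {k<..<m}) ` {Y. Y \<subseteq> {..<k} - nsum A \<and> card Y = g + card A - 2*m} else {})"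
    (is "?L = ?R")
proof -
  have As: "A \<subseteq> {..<m}" "0 \<in> A" using A unfolding Am_def by auto
  have cA: "card A \<le> m" using card_mono[OF _ As(1)] by simp
  have cardB: "card (({..<k} - Y) \<union> {k<..<m}) = (k - card Y) + (m - 1 - k)" if Y: "Y \<subseteq> {..<k}" for Y
  proof -
    have "card (({..<k} - Y) \<union> {k<..<m}) = card ({..<k} - Y) + card {k<..<m}"
      by (rule card_Un_disjoint) auto
    moreover have "card ({..<k} - Y) = k - card Y" using Y by (simp add: card_Diff_subset finite_subset)
    ultimately show ?thesis by simp
  qed
  show ?thesis
  proof (intro set_eqI iffI)
    fix B assume B: "B \<in> ?L"
    then have Bm: "B \<subseteq> {..<m}" "nsum A \<inter> {..<m} \<subseteq> B" "(m - 1) + (m - card A) + (m - card B) = g"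
      and hk: "(if B = {..<m} then 0 else Max ({..<m} - B)) = k"
      unfolding Bs_def by auto
    have Bne: "B \<noteq> {..<m}" using hk k by auto
    then have hk2: "Max ({..<m} - B) = k" using hk by simp
    have ne: "{..<m} - B \<noteq> {}" using Bm Bne by auto
    have kin: "k \<in> {..<m} - B" using Max_in[OF _ ne] hk2 by auto
    have above: "x \<in> B" if "k < x" "x < m" for x
    proof (rule ccontr)
      assume "x \<notin> B"
      then have "x \<le> Max ({..<m} - B)" using that by (intro Max_ge) auto
      then show False using hk2 that by simp
    qed
    have kn: "k \<notin> nsum A" using kin Bm(2) by auto
    define Y where "Y = {..<k} - B"
    have Ysub: "Y \<subseteq> {..<k} - nsum A" unfolding Y_def using Bm(2) k by auto
    have Beq: "B = ({..<k} - Y) \<union> {k<..<m}"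
    proof (intro set_eqI)
      fix x show "x \<in> B \<longleftrightarrow> x \<in> ({..<k} - Y) \<union> {k<..<m}"
        unfolding Y_def using above kin Bm(1) by (cases "x < k"; cases "x = k") auto
    qed
    have cY: "card Y \<le> k" using card_mono[of "{..<k}" Y] Ysub by auto
    have cB: "card B = (k - card Y) + (m - 1 - k)" using cardB[of Y] Ysub Beq by auto
    have gg: "g = 2*m - card A + card Y" using Bm(3) cB cY k cA by simp
    then have cond: "2*m \<le> g + card A" using cA by simp
    have "card Y = g + card A - 2*m" using gg cA by simp
    then show "B \<in> ?R" using kn cond Ysub Beq by auto
  next
    fix B assume B: "B \<in> ?R"
    then have c: "k \<notin> nsum A" "2*m \<le> g + card A" by (auto split: if_splits)
    then obtain Y where Y: "Y \<subseteq> {..<k} - nsum A" "card Y = g + card A - 2*m" "B = ({..<k} - Y) \<union> {k<..<m}"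
      using B by auto
    have Bsub: "B \<subseteq> {..<m}" using Y(3) k by auto
    have D: "nsum A \<inter> {..<m} \<subseteq> B"
    proof
      fix x assume "x \<in> nsum A \<inter> {..<m}"
      then show "x \<in> B" using Y c(1) by (cases "x < k"; cases "x = k") auto
    qed
    have cY: "card Y \<le> k" using card_mono[of "{..<k}" Y] Y(1) by auto
    have cB: "card B = (k - card Y) + (m - 1 - k)" using cardB[of Y] Y by auto
    have gen: "(m - 1) + (m - card A) + (m - card B) = g" using cB cY Y(2) c(2) k cA by simp
    have kB: "k \<notin> B" using Y(3) by auto
    have Bne: "B \<noteq> {..<m}" using kB k by auto
    have dif: "{..<m} - B = insert k Y" using Y k by auto
    have mx: "Max ({..<m} - B) = k" unfolding dif
      using Y(1) by (intro Max_eqI) (auto intro: finite_subset[of _ "{..<k}"])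
    show "B \<in> ?L" unfolding Bs_def using Bsub D gen Bne mx by auto
  qed
qed

lemma card_Bs:
  assumes m: "2 \<le> m" and A: "A \<in> Am m"
  shows "card (Bs m A g) = (if (m - 1) + (m - card A) = g then 1 else 0)
    + (\<Sum>k\<in>{1..<m}. if k \<notin> nsum A \<and> 2*m \<le> g + card A
         then (k - card (nsum A \<inter> {..<k})) choose (g + card A - 2*m) else 0)"
proof -
  let ?h = "\<lambda>B. if B = {..<m} then 0 else Max ({..<m} - B)"
  have As: "A \<subseteq> {..<m}" "0 \<in> A" using A unfolding Am_def by auto
  have z: "0 \<in> nsum A \<inter> {..<m}" using nsumI[OF As(2) As(2)] m by auto
  have himg: "?h ` Bs m A g \<subseteq> {..<m}"
  proof
    fix k assume "k \<in> ?h ` Bs m A g"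
    then obtain B where B: "B \<in> Bs m A g" "k = ?h B" by (rule imageE) blast
    show "k \<in> {..<m}"
    proof (cases "B = {..<m}")
      case True then show ?thesis using B m by auto
    next
      case False
      then have "{..<m} - B \<noteq> {}" using B unfolding Bs_def by auto
      then have "Max ({..<m} - B) \<in> {..<m} - B" by (intro Max_in) auto
      then show ?thesis using B False by auto
    qed
  qed
  have "card (Bs m A g) = (\<Sum>k\<in>{..<m}. card {B\<in>Bs m A g. ?h B = k})"
    by (rule card_eq_sum_group[OF Bs_finite _ himg]) simp
  also have "(\<Sum>k\<in>{..<m}. card {B\<in>Bs m A g. ?h B = k})
      = card {B\<in>Bs m A g. ?h B = 0} + (\<Sum>k\<in>{1..<m}. card {B\<in>Bs m A g. ?h B = k})"
  proof -
    have "\<And>F::nat\<Rightarrow>nat. (\<Sum>k\<in>{..<m}. F k) = F 0 + (\<Sum>k\<in>{1..<m}. F k)"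
    proof -
      fix F :: "nat \<Rightarrow> nat"
      have "{..<m} = insert 0 {1..<m}" using m by auto
      then show "(\<Sum>k\<in>{..<m}. F k) = F 0 + (\<Sum>k\<in>{1..<m}. F k)" by simp
    qed
    then show ?thesis .
  qed
  also have "card {B\<in>Bs m A g. ?h B = 0} = (if (m - 1) + (m - card A) = g then 1 else 0)"
  proof -
    have "{B\<in>Bs m A g. ?h B = 0} = (if (m - 1) + (m - card A) = g then {{..<m}} else {})"
    proof (intro set_eqI iffI)
      fix B assume B: "B \<in> {B\<in>Bs m A g. ?h B = 0}"
      have "B = {..<m}"
      proof (rule ccontr)
        assume ne: "B \<noteq> {..<m}"
        then have "{..<m} - B \<noteq> {}" using B unfolding Bs_def by auto
        then have "Max ({..<m} - B) \<in> {..<m} - B" by (intro Max_in) auto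
        moreover have "0 \<in> B" using B z unfolding Bs_def by auto
        ultimately show False using B ne by auto
      qed
      then show "B \<in> (if (m - 1) + (m - card A) = g then {{..<m}} else {})" using B unfolding Bs_def by auto
    next
      fix B assume "B \<in> (if (m - 1) + (m - card A) = g then {{..<m}} else {})"
      then show "B \<in> {B\<in>Bs m A g. ?h B = 0}" unfolding Bs_def by (auto split: if_splits)
    qed
    then show ?thesis by simp
  qed
  also have "(\<Sum>k\<in>{1..<m}. card {B\<in>Bs m A g. ?h B = k}) = (\<Sum>k\<in>{1..<m}. if k \<notin> nsum A \<and> 2*m \<le> g + card A
         then (k - card (nsum A \<inter> {..<k})) choose (g + card A - 2*m) else 0)"
  proof (rule sum.cong[OF refl])
    fix k assume k: "k \<in> {1..<m}"
    show "card {B\<in>Bs m A g. ?h B = k} = (if k \<notin> nsum A \<and> 2*m \<le> g + card A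
         then (k - card (nsum A \<inter> {..<k})) choose (g + card A - 2*m) else 0)"
    proof (cases "k \<notin> nsum A \<and> 2*m \<le> g + card A")
      case True
      have inj: "inj_on (\<lambda>Y. ({..<k} - Y) \<union> {k<..<m}) {Y. Y \<subseteq> {..<k} - nsum A \<and> card Y = g + card A - 2*m}"
      proof (rule inj_onI)
        fix Y Z assume Y: "Y \<in> {Y. Y \<subseteq> {..<k} - nsum A \<and> card Y = g + card A - 2*m}"
          and Z: "Z \<in> {Y. Y \<subseteq> {..<k} - nsum A \<and> card Y = g + card A - 2*m}"
          and e: "({..<k} - Y) \<union> {k<..<m} = ({..<k} - Z) \<union> {k<..<m}"
        have "Y = {..<k} - (({..<k} - Y) \<union> {k<..<m})" using Y by auto
        also have "\<dots> = {..<k} - (({..<k} - Z) \<union> {k<..<m})" using e by simp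
        also have "\<dots> = Z" using Z by auto
        finally show "Y = Z" .
      qed
      have cd: "card ({..<k} - nsum A) = k - card (nsum A \<inter> {..<k})"
        by (subst card_Diff_subset_Int) (auto simp: Int_commute)
      have "card {B\<in>Bs m A g. ?h B = k} = card ((\<lambda>Y. ({..<k} - Y) \<union> {k<..<m}) ` {Y. Y \<subseteq> {..<k} - nsum A \<and> card Y = g + card A - 2*m})"
        using Bs_group[OF m A, of k g] k True by simp
      also have "\<dots> = card {Y. Y \<subseteq> {..<k} - nsum A \<and> card Y = g + card A - 2*m}"
        by (rule card_image[OF inj])
      also have "\<dots> = (k - card (nsum A \<inter> {..<k})) choose (g + card A - 2*m)"
        by (subst n_subsets) (auto simp: cd)
      finally show ?thesis using True by simp
    next
      case False
      have e: "{B\<in>Bs m A g. ?h B = k} = {}" using Bs_group[OF m A, of k g] k False by simp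
      have "card {B\<in>Bs m A g. ?h B = k} = 0" by (simp only: e card.empty)
      moreover have "(if k \<notin> nsum A \<and> 2*m \<le> g + card A
         then (k - card (nsum A \<inter> {..<k})) choose (g + card A - 2*m) else 0) = 0"
        using False by (rule if_not_P)
      ultimately show ?thesis by (simp only:)
    qed
  qed
  finally show ?thesis .
qed

lemma card_triples_sum:
  "card (triples g) = (\<Sum>m\<in>{2..g+1}. \<Sum>A\<in>Am m. card (Bs m A g))"
proof -
  have eq: "triples g = Sigma {2..g+1} (\<lambda>m. Sigma (Am m) (\<lambda>A. Bs m A g))"
  proof (intro set_eqI iffI)
    fix x assume "x \<in> triples g"
    then obtain m A B where x: "x = (m, A, B)" "validT m A B" "(m - 1) + (m - card A) + (m - card B) = g"
      unfolding triples_def by auto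
    then show "x \<in> Sigma {2..g+1} (\<lambda>m. Sigma (Am m) (\<lambda>A. Bs m A g))"
      unfolding validT_iff Bs_def by auto
  next
    fix x assume "x \<in> Sigma {2..g+1} (\<lambda>m. Sigma (Am m) (\<lambda>A. Bs m A g))"
    then obtain m A B where x: "x = (m, A, B)" "m \<in> {2..g+1}" "A \<in> Am m" "B \<in> Bs m A g" by auto
    then show "x \<in> triples g" unfolding triples_def validT_iff Bs_def by auto
  qed
  show ?thesis unfolding eq
    by (subst card_SigmaI) (auto simp: Am_finite Bs_finite card_SigmaI intro!: sum.cong finite_SigmaI)
qed

lemma count_full:
  assumes m: "2 \<le> m" "m \<le> g + 1"
  shows "(\<Sum>A\<in>Am m. (if (m - 1) + (m - card A) = g then 1 else 0::nat)) = (m - 1) choose (g + 1 - m)"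
proof -
  have "(\<Sum>A\<in>Am m. (if (m - 1) + (m - card A) = g then 1 else 0::nat)) = card {A\<in>Am m. (m - 1) + (m - card A) = g}"
    by (simp add: sum.If_cases Am_finite Int_def conj_commute)
  also have "{A\<in>Am m. (m - 1) + (m - card A) = g} = (\<lambda>Y. {..<m} - Y) ` {Y. Y \<subseteq> {1..<m} \<and> card Y = g + 1 - m}"
  proof (intro set_eqI iffI)
    fix A assume A: "A \<in> {A\<in>Am m. (m - 1) + (m - card A) = g}"
    then have As: "A \<subseteq> {..<m}" "0 \<in> A" "(m - 1) + (m - card A) = g" unfolding Am_def by auto
    define Y where "Y = {1..<m} - A"
    have Asub: "A = {..<m} - Y" unfolding Y_def using As by (auto simp: Suc_le_eq intro: Nat.gr0I)
    have c1: "card A \<ge> 1" using As by (auto simp: Suc_le_eq card_gt_0_iff intro: finite_subset)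
    have c2: "card A \<le> m" using card_mono[OF _ As(1)] by simp
    have "card Y = m - card A"
    proof -
      have "card Y = card ({1..<m} - (A - {0}))" unfolding Y_def by (rule arg_cong[where f=card]) auto
      also have "\<dots> = card {1..<m} - card (A - {0})" using As by (intro card_Diff_subset) (auto intro: finite_subset)
      also have "card (A - {0}) = card A - 1" using As by (simp add: finite_subset)
      finally show ?thesis using c1 c2 by simp
    qed
    then have "card Y = g + 1 - m" using As(3) c1 c2 by simp
    moreover have "Y \<subseteq> {1..<m}" unfolding Y_def by auto
    ultimately show "A \<in> (\<lambda>Y. {..<m} - Y) ` {Y. Y \<subseteq> {1..<m} \<and> card Y = g + 1 - m}" using Asub by auto
  next
    fix A assume "A \<in> (\<lambda>Y. {..<m} - Y) ` {Y. Y \<subseteq> {1..<m} \<and> card Y = g + 1 - m}"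
    then obtain Y where Y: "Y \<subseteq> {1..<m}" "card Y = g + 1 - m" "A = {..<m} - Y" by auto
    have cA: "card A = m - card Y" unfolding Y(3) using Y(1) by (subst card_Diff_subset) (auto intro: finite_subset)
    have "card Y \<le> m - 1" using card_mono[OF _ Y(1)] by simp
    then have "(m - 1) + (m - card A) = g" using cA Y(2) m by simp
    moreover have "A \<in> Am m" unfolding Am_def using Y m by auto
    ultimately show "A \<in> {A\<in>Am m. (m - 1) + (m - card A) = g}" by simp
  qed
  also have "card \<dots> = card {Y. Y \<subseteq> {1..<m} \<and> card Y = g + 1 - m}"
  proof (rule card_image, rule inj_onI)
    fix Y Z assume Y: "Y \<in> {Y. Y \<subseteq> {1..<m} \<and> card Y = g + 1 - m}" and Z: "Z \<in> {Y. Y \<subseteq> {1..<m} \<and> card Y = g + 1 - m}"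
      and e: "{..<m} - Y = {..<m} - Z"
    have "Y = {..<m} - ({..<m} - Y)" using Y by auto
    also have "\<dots> = Z" using Z e by auto
    finally show "Y = Z" .
  qed
  also have "\<dots> = (m - 1) choose (g + 1 - m)" by (subst n_subsets) auto
  finally show ?thesis .
qed

lemma sum_full_fib:
  assumes g: "g \<ge> 1"
  shows "(\<Sum>m\<in>{2..g+1}. \<Sum>A\<in>Am m. (if (m - 1) + (m - card A) = g then 1 else 0::nat)) = fib (g + 1)"
proof -
  have "(\<Sum>m\<in>{2..g+1}. \<Sum>A\<in>Am m. (if (m - 1) + (m - card A) = g then 1 else 0::nat))
      = (\<Sum>m\<in>{2..g+1}. (m - 1) choose (g + 1 - m))"
    by (rule sum.cong[OF refl], rule count_full) auto
  also have "\<dots> = (\<Sum>k\<in>{0..<g}. (g - k) choose k)"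
    by (rule sum.reindex_bij_witness[of _ "\<lambda>k. g + 1 - k" "\<lambda>m. g + 1 - m"]) auto
  also have "\<dots> = (\<Sum>k=0..g. (g - k) choose k)"
    using g by (simp add: atLeastLessThanSuc_atLeastAtMost[symmetric])
  also have "\<dots> = fib (g + 1)" using ne_diagonal_fib[of g] by simp
  finally show ?thesis .
qed


lemma nsum_mono: "A \<subseteq> B \<Longrightarrow> nsum A \<subseteq> nsum B"
  unfolding nsum_def by blast

lemma nsum_split:
  assumes "A \<subseteq> {..<k}" "X \<subseteq> {k<..}"
  shows "nsum (A \<union> X) \<inter> {..k} = nsum A \<inter> {..k}"
proof (intro set_eqI iffI)
  fix x assume "x \<in> nsum (A \<union> X) \<inter> {..k}"
  then obtain a b where ab: "a \<in> A \<union> X" "b \<in> A \<union> X" "x = a + b" "x \<le> k" unfolding nsum_def by auto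
  then have "a \<in> A" "b \<in> A" using assms by auto
  then show "x \<in> nsum A \<inter> {..k}" using ab unfolding nsum_def by auto
next
  fix x assume "x \<in> nsum A \<inter> {..k}"
  then show "x \<in> nsum (A \<union> X) \<inter> {..k}" using nsum_mono[of A "A \<union> X"] by auto
qed

lemma sum_Pow_card:
  fixes G :: "nat \<Rightarrow> nat"
  assumes "finite S"
  shows "(\<Sum>X\<in>Pow S. G (card X)) = (\<Sum>i\<in>{..card S}. (card S choose i) * G i)"
proof -
  have "(\<Sum>X\<in>Pow S. G (card X)) = (\<Sum>i\<in>{..card S}. \<Sum>X\<in>{X\<in>Pow S. card X = i}. G (card X))"
    by (rule sum.group[symmetric]) (use assms in \<open>auto intro: card_mono\<close>)
  also have "\<dots> = (\<Sum>i\<in>{..card S}. (card S choose i) * G i)"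
  proof (intro sum.cong refl)
    fix i
    have e: "{X\<in>Pow S. card X = i} = {X. X \<subseteq> S \<and> card X = i}" by auto
    have "(\<Sum>X\<in>{X\<in>Pow S. card X = i}. G (card X)) = (\<Sum>X\<in>{X\<in>Pow S. card X = i}. G i)" by simp
    also have "\<dots> = card {X\<in>Pow S. card X = i} * G i" by simp
    also have "\<dots> = (card S choose i) * G i" unfolding e n_subsets[OF assms] ..
    finally show "(\<Sum>X\<in>{X\<in>Pow S. card X = i}. G (card X)) = (card S choose i) * G i" .
  qed
  finally show ?thesis .
qed

lemma split_facts:
  assumes A': "A' \<in> calAn k" and X: "X \<subseteq> {k<..<m}"
  shows "card (A' \<union> X) = card A' + card X" "card (nsum (A' \<union> X) \<inter> {..<k}) = sN k A'"
    "k \<notin> nsum (A' \<union> X)"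
proof -
  have A's: "A' \<subseteq> {..<k}" "0 \<in> A'" "k \<notin> nsum A'" using A' unfolding calAn_def by auto
  have X': "X \<subseteq> {k<..}" using X by auto
  have sp: "nsum (A' \<union> X) \<inter> {..k} = nsum A' \<inter> {..k}" by (rule nsum_split[OF A's(1) X'])
  show "k \<notin> nsum (A' \<union> X)" using sp A's(3) by auto
  have fin: "finite A'" "finite X" using A's X by (auto intro: finite_subset)
  show "card (A' \<union> X) = card A' + card X"
  proof (rule card_Un_disjoint)
    show "A' \<inter> X = {}" using A's(1) X by fastforce
  qed (use fin in auto)
  have sp': "\<And>x. x \<in> nsum (A' \<union> X) \<and> x \<le> k \<longleftrightarrow> x \<in> nsum A' \<and> x \<le> k"
    using sp by (simp add: set_eq_iff)
  have s1: "nsum (A' \<union> X) \<inter> {..<k} = nsum A' \<inter> {..<k}"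
  proof (intro set_eqI)
    fix x show "x \<in> nsum (A' \<union> X) \<inter> {..<k} \<longleftrightarrow> x \<in> nsum A' \<inter> {..<k}" using sp'[of x] by auto
  qed
  have "nsum A' \<inter> {..k} = nsum A' \<inter> {..<k}"
  proof (intro set_eqI)
    fix x show "x \<in> nsum A' \<inter> {..k} \<longleftrightarrow> x \<in> nsum A' \<inter> {..<k}"
      using A's(3) by (cases "x = k") auto
  qed
  then show "card (nsum (A' \<union> X) \<inter> {..<k}) = sN k A'" unfolding sN_def s1 by simp
qed

lemma Am_split:
  assumes k: "1 \<le> k" "k < m"
  shows "(\<Sum>A\<in>Am m. if k \<notin> nsum A \<and> 2*m \<le> g + card A
            then (k - card (nsum A \<inter> {..<k})) choose (g + card A - 2*m) else 0)
       = (\<Sum>A'\<in>calAn k. \<Sum>X\<in>Pow {k<..<m}.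
            if 2*m \<le> g + card A' + card X then (k - sN k A') choose (g + card A' + card X - 2*m) else 0)"
proof -
  let ?S = "{A\<in>Am m. k \<notin> nsum A}"
  have "(\<Sum>A\<in>Am m. if k \<notin> nsum A \<and> 2*m \<le> g + card A
            then (k - card (nsum A \<inter> {..<k})) choose (g + card A - 2*m) else 0)
      = (\<Sum>A\<in>?S. if 2*m \<le> g + card A
            then (k - card (nsum A \<inter> {..<k})) choose (g + card A - 2*m) else 0)"
    by (rule sum.mono_neutral_cong_right) (auto simp: Am_finite)
  also have "\<dots> = (\<Sum>(A',X)\<in>calAn k \<times> Pow {k<..<m}.
            if 2*m \<le> g + card A' + card X then (k - sN k A') choose (g + card A' + card X - 2*m) else 0)"
  proof (rule sum.reindex_bij_witness[of _ "\<lambda>(A',X). A' \<union> X" "\<lambda>A. (A \<inter> {..<k}, A \<inter> {k<..<m})"])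
    fix A assume A: "A \<in> ?S"
    have As: "A \<subseteq> {..<m}" "0 \<in> A" "k \<notin> nsum A" using A unfolding Am_def by auto
    have kA: "k \<notin> A" using As nsumI[of 0 A k] by auto
    have AU: "A \<inter> {..<k} \<union> A \<inter> {k<..<m} = A"
    proof (intro set_eqI iffI)
      fix x assume "x \<in> A"
      then show "x \<in> A \<inter> {..<k} \<union> A \<inter> {k<..<m}"
        using As kA by (cases "x < k"; cases "x = k") auto
    qed auto
    then show "(\<lambda>(A',X). A' \<union> X) ((\<lambda>A. (A \<inter> {..<k}, A \<inter> {k<..<m})) A) = A" by simp
    have c1: "A \<inter> {..<k} \<in> calAn k"
    proof -
      have "nsum (A \<inter> {..<k}) \<subseteq> nsum A" by (rule nsum_mono) auto
      then show ?thesis unfolding calAn_def using As k by auto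
    qed
    then show "(\<lambda>A. (A \<inter> {..<k}, A \<inter> {k<..<m})) A \<in> calAn k \<times> Pow {k<..<m}" by auto
    have X: "A \<inter> {k<..<m} \<subseteq> {k<..<m}" by auto
    note sf = split_facts[OF c1 X, unfolded AU]
    show "(case (A \<inter> {..<k}, A \<inter> {k<..<m}) of (A',X) \<Rightarrow>
            if 2*m \<le> g + card A' + card X then (k - sN k A') choose (g + card A' + card X - 2*m) else 0)
        = (if 2*m \<le> g + card A
            then (k - card (nsum A \<inter> {..<k})) choose (g + card A - 2*m) else 0)"
      by (simp only: prod.case sf(1,2) add.assoc)
  next
    fix p assume p: "p \<in> calAn k \<times> Pow {k<..<m}"
    obtain A' X where pp: "p = (A', X)" by (cases p)
    have A': "A' \<in> calAn k" "A' \<subseteq> {..<k}" "0 \<in> A'" using p pp unfolding calAn_def by auto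
    have X: "X \<subseteq> {k<..<m}" using p pp by auto
    note sf = split_facts[OF A'(1) X]
    have i1: "(A' \<union> X) \<inter> {..<k} = A'" using A'(2) X by auto
    have i2: "(A' \<union> X) \<inter> {k<..<m} = X" using A'(2) X by auto
    show "(\<lambda>A. (A \<inter> {..<k}, A \<inter> {k<..<m})) ((\<lambda>(A',X). A' \<union> X) p) = p"
      unfolding pp by (simp only: prod.case i1 i2)
    have "A' \<union> X \<in> Am m" unfolding Am_def using A' X k by auto
    then show "(\<lambda>(A',X). A' \<union> X) p \<in> ?S" using sf(3) unfolding pp by simp
  qed
  also have "\<dots> = (\<Sum>A'\<in>calAn k. \<Sum>X\<in>Pow {k<..<m}.
            if 2*m \<le> g + card A' + card X then (k - sN k A') choose (g + card A' + card X - 2*m) else 0)"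
    by (rule sum.cartesian_product[symmetric])
  finally show ?thesis .
qed

definition hk :: "nat \<Rightarrow> nat \<Rightarrow> nat" where
  "hk g k = (\<Sum>A\<in>calAn k. \<Sum>j\<in>{..k - sN k A}. ((k - sN k A) choose j) * fib (g + card A - (2*k+1+j)))"

lemma count_main:
  assumes g: "g \<ge> 1"
  shows "card (triples g) = fib (g + 1) + (\<Sum>k\<in>{1..g}. hk g k)"
proof -
  let ?f = "\<lambda>m A k. if k \<notin> nsum A \<and> 2*m \<le> g + card A
         then (k - card (nsum A \<inter> {..<k})) choose (g + card A - 2*m) else 0"
  have "card (triples g) = (\<Sum>m\<in>{2..g+1}. \<Sum>A\<in>Am m. card (Bs m A g))" by (rule card_triples_sum)
  also have "\<dots> = (\<Sum>m\<in>{2..g+1}. \<Sum>A\<in>Am m. (if (m - 1) + (m - card A) = g then 1 else 0)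
        + (\<Sum>k\<in>{1..<m}. ?f m A k))"
    by (intro sum.cong refl card_Bs) auto
  also have "\<dots> = (\<Sum>m\<in>{2..g+1}. \<Sum>A\<in>Am m. (if (m - 1) + (m - card A) = g then 1 else 0))
       + (\<Sum>m\<in>{2..g+1}. \<Sum>A\<in>Am m. \<Sum>k\<in>{1..<m}. ?f m A k)"
    by (simp add: sum.distrib)
  also have "(\<Sum>m\<in>{2..g+1}. \<Sum>A\<in>Am m. (if (m - 1) + (m - card A) = g then 1 else 0)) = fib (g + 1)"
    by (rule sum_full_fib[OF g])
  also have "(\<Sum>m\<in>{2..g+1}. \<Sum>A\<in>Am m. \<Sum>k\<in>{1..<m}. ?f m A k)
      = (\<Sum>m\<in>{2..g+1}. \<Sum>k\<in>{1..<m}. \<Sum>A\<in>Am m. ?f m A k)"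
    by (intro sum.cong refl sum.swap)
  also have "\<dots> = (\<Sum>m\<in>{2..g+1}. \<Sum>k\<in>{k\<in>{1..g}. k < m}. \<Sum>A\<in>Am m. ?f m A k)"
    by (intro sum.cong refl) auto
  also have "\<dots> = (\<Sum>k\<in>{1..g}. \<Sum>m\<in>{m\<in>{2..g+1}. k < m}. \<Sum>A\<in>Am m. ?f m A k)"
    by (rule sum.swap_restrict) auto
  also have "\<dots> = (\<Sum>k\<in>{1..g}. \<Sum>m\<in>{k+1..g+1}. \<Sum>A\<in>Am m. ?f m A k)"
    by (intro sum.cong refl) auto
  also have "\<dots> = (\<Sum>k\<in>{1..g}. \<Sum>m\<in>{k+1..g+1}. \<Sum>A'\<in>calAn k. \<Sum>X\<in>Pow {k<..<m}.
            if 2*m \<le> g + card A' + card X then (k - sN k A') choose (g + card A' + card X - 2*m) else 0)"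
    by (intro sum.cong refl Am_split) auto
  also have "\<dots> = (\<Sum>k\<in>{1..g}. \<Sum>m\<in>{k+1..g+1}. \<Sum>A'\<in>calAn k. \<Sum>i\<in>{..m-1-k}. ((m-1-k) choose i) *
            (if 2*m \<le> g + card A' + i then (k - sN k A') choose (g + card A' + i - 2*m) else 0))"
  proof (intro sum.cong refl)
    fix k m A'
    show "(\<Sum>X\<in>Pow {k<..<m}. if 2*m \<le> g + card A' + card X then (k - sN k A') choose (g + card A' + card X - 2*m) else 0)
      = (\<Sum>i\<in>{..m-1-k}. ((m-1-k) choose i) *
            (if 2*m \<le> g + card A' + i then (k - sN k A') choose (g + card A' + i - 2*m) else 0))"
      using sum_Pow_card[of "{k<..<m}" "\<lambda>i. if 2*m \<le> g + card A' + i then (k - sN k A') choose (g + card A' + i - 2*m) else 0"]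
      by simp
  qed
  also have "\<dots> = (\<Sum>k\<in>{1..g}. \<Sum>A'\<in>calAn k. \<Sum>m\<in>{k+1..g+1}. \<Sum>i\<in>{..m-1-k}. ((m-1-k) choose i) *
            (if 2*m \<le> g + card A' + i then (k - sN k A') choose (g + card A' + i - 2*m) else 0))"
    by (intro sum.cong refl sum.swap)
  also have "\<dots> = (\<Sum>k\<in>{1..g}. hk g k)"
    unfolding hk_def
  proof (rule sum.cong[OF refl], rule sum.cong[OF refl])
    fix k A' assume k: "k \<in> {1..g}" and A': "A' \<in> calAn k"
    have a: "card A' \<le> k" using A' card_mono[of "{..<k}" A'] unfolding calAn_def by auto
    show "(\<Sum>m\<in>{k+1..g+1}. \<Sum>i\<in>{..m-1-k}. ((m-1-k) choose i) *
            (if 2*m \<le> g + card A' + i then (k - sN k A') choose (g + card A' + i - 2*m) else 0))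
        = (\<Sum>j\<in>{..k - sN k A'}. ((k - sN k A') choose j) * fib (g + card A' - (2*k+1+j)))"
      by (rule C4_identity) (use k a in auto)
  qed
  finally show ?thesis .
qed


context
  fixes \<phi> :: real
  defines "\<phi> \<equiv> (1 + sqrt 5) / 2"
begin

lemma phi_pos: "\<phi> > 0" and phi_q: "\<phi> * inverse \<phi> = 1" and q_plus1: "inverse \<phi> + 1 = \<phi>"
proof -
  show "\<phi> > 0" unfolding \<phi>_def by (simp add: add_pos_nonneg)
  then show "\<phi> * inverse \<phi> = 1" by simp
  have "\<phi>^2 = \<phi> + 1" using phi_facts(2) unfolding \<phi>_def by simp
  then show "inverse \<phi> + 1 = \<phi>" using \<open>\<phi> > 0\<close> by (simp add: power2_eq_square field_simps)
qed

lemma fib_le_phi: "real (fib n) \<le> \<phi> ^ n * inverse \<phi>"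
proof (induction n rule: fib.induct)
  case 1 then show ?case using phi_pos by simp
next
  case 2 then show ?case using phi_q by simp
next
  case (3 n)
  have "real (fib (Suc (Suc n))) = real (fib (Suc n)) + real (fib n)" by simp
  also have "\<dots> \<le> \<phi> ^ Suc n * inverse \<phi> + \<phi> ^ n * inverse \<phi>" using 3 by simp
  also have "\<dots> = \<phi> ^ n * inverse \<phi> * (\<phi> + 1)" by (simp add: algebra_simps)
  also have "\<phi> + 1 = \<phi>^2" using phi_facts(2) unfolding \<phi>_def by simp
  also have "\<phi> ^ n * inverse \<phi> * \<phi>^2 = \<phi> ^ Suc (Suc n) * inverse \<phi>" by (simp add: power2_eq_square)
  finally show ?case .
qed

lemma fib_q_lim: "(\<lambda>n. real (fib n) * inverse \<phi> ^ n) \<longlonglongrightarrow> 1 / sqrt 5"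
proof -
  have "(\<lambda>n. real (fib n) / (\<phi> ^ n / sqrt 5)) \<longlonglongrightarrow> 1" using fib_asymptotics unfolding \<phi>_def by simp
  then have "(\<lambda>n. real (fib n) / (\<phi> ^ n / sqrt 5) * (1 / sqrt 5)) \<longlonglongrightarrow> 1 * (1 / sqrt 5)"
    by (intro tendsto_mult tendsto_const)
  moreover have "real (fib n) / (\<phi> ^ n / sqrt 5) * (1 / sqrt 5) = real (fib n) * inverse \<phi> ^ n" for n
    using phi_pos by (simp add: field_simps power_inverse)
  ultimately show ?thesis by simp
qed

lemma fib_shift_lim:
  "(\<lambda>g. real (fib (g + p - r)) * inverse \<phi> ^ g) \<longlonglongrightarrow> \<phi> ^ p * inverse \<phi> ^ r / sqrt 5"
proof (rule LIMSEQ_offset[where k = r])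
  have a: "(\<lambda>h. real (fib (h + p)) * inverse \<phi> ^ (h + p)) \<longlonglongrightarrow> 1 / sqrt 5"
    using LIMSEQ_ignore_initial_segment[OF fib_q_lim, of p] by simp
  have "(\<lambda>h. real (fib (h + p)) * inverse \<phi> ^ (h + p) * (\<phi> ^ p * inverse \<phi> ^ r)) \<longlonglongrightarrow> 1 / sqrt 5 * (\<phi> ^ p * inverse \<phi> ^ r)"
    by (intro tendsto_mult a tendsto_const)
  moreover have "real (fib (h + p)) * inverse \<phi> ^ (h + p) * (\<phi> ^ p * inverse \<phi> ^ r)
      = real (fib (h + r + p - r)) * inverse \<phi> ^ (h + r)" for h
  proof -
    have "inverse \<phi> ^ (h + p) * (\<phi> ^ p * inverse \<phi> ^ r) = inverse \<phi> ^ (h + r) * (inverse \<phi> * \<phi>) ^ p"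
      by (simp add: power_add power_mult_distrib algebra_simps)
    also have "\<dots> = inverse \<phi> ^ (h + r)" using phi_q by (simp add: mult.commute)
    finally show ?thesis by (simp add: mult.assoc)
  qed
  ultimately show "(\<lambda>h. real (fib (h + r + p - r)) * inverse \<phi> ^ (h + r)) \<longlonglongrightarrow> \<phi> ^ p * inverse \<phi> ^ r / sqrt 5"
    by simp
qed

lemma fib_shift_bound:
  "real (fib (g + p - r)) * inverse \<phi> ^ g \<le> \<phi> ^ p * inverse \<phi> ^ (r + 1)"
proof (cases "r \<le> g + p")
  case True
  have "real (fib (g + p - r)) * inverse \<phi> ^ g \<le> (\<phi> ^ (g + p - r) * inverse \<phi>) * inverse \<phi> ^ g"
    by (rule mult_right_mono[OF fib_le_phi]) (use phi_pos in simp)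
  also have "\<dots> = \<phi> ^ p * inverse \<phi> ^ (r + 1)"
  proof -
    have "\<phi> ^ (g + p - r) * inverse \<phi> ^ (r+1) * \<phi> ^ r = \<phi> ^ (g + p) * inverse \<phi> ^ (r + 1)"
      using True by (simp add: power_add[symmetric] algebra_simps)
    then have "\<phi> ^ (g + p - r) * inverse \<phi> ^ (r+1) = \<phi> ^ (g + p) * inverse \<phi> ^ (r + 1) * inverse \<phi> ^ r"
      using phi_pos by (simp add: field_simps power_inverse)
    moreover have "\<phi> ^ (g + p) * inverse \<phi> ^ g = \<phi> ^ p"
      using phi_pos by (simp add: power_add field_simps power_inverse)
    ultimately show ?thesis using phi_pos by (simp add: field_simps power_inverse power_add)
  qed
  finally show ?thesis .
next
  case False
  then have "g + p - r = 0" by simp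
  then show ?thesis using phi_pos by simp
qed

lemma sN_le_k: "A \<in> calAn k \<Longrightarrow> sN k A \<le> k"
proof -
  assume A: "A \<in> calAn k"
  have "nsum A \<inter> {..k} \<subseteq> {..<k}" using A unfolding calAn_def by (auto simp: le_less)
  then show ?thesis unfolding sN_def using card_mono[of "{..<k}"] by fastforce
qed

lemma inner_value:
  assumes A: "A \<in> calAn k"
  shows "(\<Sum>j\<in>{..k - sN k A}. real ((k - sN k A) choose j) * (\<phi> ^ card A * inverse \<phi> ^ (2*k+1+j)))
       = inverse \<phi> ^ (sN k A - card A) * inverse \<phi> ^ (k+1)"
proof -
  let ?q = "inverse \<phi>"
  let ?s = "sN k A" and ?a = "card A"
  have as: "?a \<le> ?s" by (rule calAn_card_le[OF A])
  have sk: "?s \<le> k" by (rule sN_le_k[OF A])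
  have "(\<Sum>j\<in>{..k - ?s}. real ((k - ?s) choose j) * (\<phi> ^ ?a * ?q ^ (2*k+1+j)))
      = \<phi> ^ ?a * ?q ^ (2*k+1) * (\<Sum>j\<in>{..k - ?s}. real ((k - ?s) choose j) * ?q ^ j * 1 ^ (k - ?s - j))"
    by (simp add: sum_distrib_left power_add algebra_simps)
  also have "(\<Sum>j\<in>{..k - ?s}. real ((k - ?s) choose j) * ?q ^ j * 1 ^ (k - ?s - j)) = (?q + 1) ^ (k - ?s)"
    by (rule binomial_ring[symmetric])
  also have "?q + 1 = \<phi>" by (rule q_plus1)
  also have "\<phi> ^ ?a * ?q ^ (2*k+1) * \<phi> ^ (k - ?s) = (\<phi> * ?q) ^ (?a + (k - ?s)) * ?q ^ (?s - ?a + (k+1))"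
  proof -
    have e: "2*k+1 = (?a + (k - ?s)) + (?s - ?a + (k+1))" using as sk by simp
    show ?thesis unfolding e power_add power_mult_distrib by (simp add: algebra_simps)
  qed
  also have "\<dots> = ?q ^ (?s - ?a) * ?q ^ (k+1)" using phi_q by (simp add: power_add)
  finally show ?thesis .
qed

definition Tn :: "nat \<Rightarrow> real" where
  "Tn k = (\<Sum>A\<in>calAn k. inverse \<phi> ^ (sN k A - card A) * inverse \<phi> ^ (k+1))"

lemma hk_expand:
  "real (hk g k) * inverse \<phi> ^ g = (\<Sum>A\<in>calAn k. \<Sum>j\<in>{..k - sN k A}.
       real ((k - sN k A) choose j) * (real (fib (g + card A - (2*k+1+j))) * inverse \<phi> ^ g))"
proof -
  have "real (hk g k) = (\<Sum>A\<in>calAn k. \<Sum>j\<in>{..k - sN k A}.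
       real ((k - sN k A) choose j) * real (fib (g + card A - (2*k+1+j))))" by (simp add: hk_def)
  then show ?thesis by (simp only: sum_distrib_right mult.assoc)
qed

lemma hk_lim: "(\<lambda>g. real (hk g k) * inverse \<phi> ^ g) \<longlonglongrightarrow> Tn k / sqrt 5"
proof -
  have "(\<lambda>g. \<Sum>A\<in>calAn k. \<Sum>j\<in>{..k - sN k A}.
       real ((k - sN k A) choose j) * (real (fib (g + card A - (2*k+1+j))) * inverse \<phi> ^ g))
     \<longlonglongrightarrow> (\<Sum>A\<in>calAn k. \<Sum>j\<in>{..k - sN k A}.
       real ((k - sN k A) choose j) * (\<phi> ^ card A * inverse \<phi> ^ (2*k+1+j) / sqrt 5))"
    by (intro tendsto_sum tendsto_mult tendsto_const fib_shift_lim)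
  moreover have "(\<Sum>A\<in>calAn k. \<Sum>j\<in>{..k - sN k A}.
       real ((k - sN k A) choose j) * (\<phi> ^ card A * inverse \<phi> ^ (2*k+1+j) / sqrt 5)) = Tn k / sqrt 5"
  proof -
    have "(\<Sum>A\<in>calAn k. \<Sum>j\<in>{..k - sN k A}.
       real ((k - sN k A) choose j) * (\<phi> ^ card A * inverse \<phi> ^ (2*k+1+j) / sqrt 5))
       = (\<Sum>A\<in>calAn k. (\<Sum>j\<in>{..k - sN k A}.
       real ((k - sN k A) choose j) * (\<phi> ^ card A * inverse \<phi> ^ (2*k+1+j))) / sqrt 5)"
      by (simp add: sum_divide_distrib)
    also have "\<dots> = (\<Sum>A\<in>calAn k. inverse \<phi> ^ (sN k A - card A) * inverse \<phi> ^ (k+1) / sqrt 5)"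
      by (rule sum.cong[OF refl]) (simp only: inner_value)
    also have "\<dots> = Tn k / sqrt 5" unfolding Tn_def by (simp add: sum_divide_distrib)
    finally show ?thesis .
  qed
  ultimately show ?thesis unfolding hk_expand by simp
qed

lemma hk_bound: "real (hk g k) * inverse \<phi> ^ g \<le> inverse \<phi> * Tn k"
proof -
  have "real (hk g k) * inverse \<phi> ^ g \<le> (\<Sum>A\<in>calAn k. \<Sum>j\<in>{..k - sN k A}.
       real ((k - sN k A) choose j) * (\<phi> ^ card A * inverse \<phi> ^ ((2*k+1+j) + 1)))"
    unfolding hk_expand by (intro sum_mono mult_left_mono fib_shift_bound) auto
  also have "\<dots> = inverse \<phi> * (\<Sum>A\<in>calAn k. \<Sum>j\<in>{..k - sN k A}.
       real ((k - sN k A) choose j) * (\<phi> ^ card A * inverse \<phi> ^ (2*k+1+j)))"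
    by (simp add: sum_distrib_left algebra_simps)
  also have "(\<Sum>A\<in>calAn k. \<Sum>j\<in>{..k - sN k A}.
       real ((k - sN k A) choose j) * (\<phi> ^ card A * inverse \<phi> ^ (2*k+1+j))) = Tn k"
    unfolding Tn_def by (rule sum.cong[OF refl]) (simp only: inner_value)
  finally show ?thesis .
qed

end


lemma hk_zero: "g < k \<Longrightarrow> hk g k = 0"
  unfolding hk_def
proof (intro sum.neutral ballI)
  fix A j assume gk: "g < k" and A: "A \<in> calAn k"
  have "card A \<le> k" using A card_mono[of "{..<k}" A] unfolding calAn_def by auto
  then have "g + card A - (2*k+1+j) = 0" using gk by simp
  then show "((k - sN k A) choose j) * fib (g + card A - (2*k+1+j)) = 0" by simp
qed

theorem theorem3p11:
  defines "\<phi> \<equiv> (1 + sqrt 5) / 2"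
  defines "T \<equiv> (\<lambda>k::nat. \<Sum>A\<in>calA k.
              \<phi> powr (- real (card (sumset A \<inter> {0..int k})) + real (card A) - real k - 1))"
  shows "summable (\<lambda>n. T (n + 1)) \<and>
         (\<lambda>g. real (t_count g) * \<phi> powr (- real g)) \<longlonglongrightarrow>
           \<phi> / sqrt 5 + (1 / sqrt 5) * (\<Sum>n. T (n + 1))"
proof -
  let ?q = "inverse \<phi>"
  note X = T_summable[folded \<phi>_def]
  have TS1: "summable T" unfolding T_def by (rule X(1))
  have TS2: "T k \<ge> 0" for k unfolding T_def using X(2)[of k] by simp
  have TS3: "T k = Tn k" for k unfolding T_def Tn_def[folded \<phi>_def] using X(3)[of k] by simp
  note TS = TS1 TS2 TS3
  have sumT: "summable (\<lambda>n. T (n + 1))" using TS(1) summable_iff_shift[of T 1] by simp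
  have php: "\<phi> > 0" using phi_pos unfolding \<phi>_def by simp
  define a where "a n g = real (hk g (n+1)) * ?q ^ g" for n g
  have alim: "(\<lambda>g. a n g) \<longlonglongrightarrow> T (n+1) / sqrt 5" for n
    unfolding a_def TS(3) using hk_lim[folded \<phi>_def] by simp
  have abound: "norm (a n g) \<le> ?q * T (n+1)" for n g
  proof -
    have "0 \<le> a n g" unfolding a_def using php by simp
    then show ?thesis unfolding a_def TS(3) using hk_bound[folded \<phi>_def, of g "n+1"] by simp
  qed
  have Msum: "summable (\<lambda>n. ?q * T (n+1))" using sumT by (rule summable_mult)
  have tan: "(\<lambda>g. \<Sum>n. a n g) \<longlonglongrightarrow> (\<Sum>n. T (n+1) / sqrt 5)"
  proof -
    have ev: "\<forall>\<^sub>F (k, n) in sequentially \<times>\<^sub>F sequentially. norm (a k n) \<le> ?q * T (k+1)"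
      by (rule always_eventually) (use abound in \<open>simp add: case_prod_beta\<close>)
    show ?thesis
      using tannerys_theorem[where a = a and b = "\<lambda>n. T (n+1) / sqrt 5" and F = sequentially
        and M = "\<lambda>n. ?q * T (n+1)", OF alim ev Msum] by simp
  qed
  have fiblim: "(\<lambda>g. real (fib (g + 1)) * ?q ^ g) \<longlonglongrightarrow> \<phi> / sqrt 5"
    using fib_shift_lim[folded \<phi>_def, of 1 0] by simp
  have eq: "real (t_count g) * \<phi> powr (- real g) = real (fib (g + 1)) * ?q ^ g + (\<Sum>n. a n g)"
    if g: "g \<ge> 1" for g
  proof -
    have "\<phi> powr (- real g) = ?q ^ g" using php by (simp add: powr_minus powr_realpow power_inverse)
    moreover have "t_count g = fib (g + 1) + (\<Sum>k\<in>{1..g}. hk g k)"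
      using t_count_triples[OF g] count_main[OF g] by simp
    moreover have "(\<Sum>k\<in>{1..g}. hk g k) = (\<Sum>n\<in>{..<g}. hk g (n+1))"
      by (rule sum.reindex_bij_witness[of _ "\<lambda>n. n + 1" "\<lambda>k. k - 1"]) auto
    moreover have "(\<Sum>n. a n g) = (\<Sum>n\<in>{..<g}. a n g)"
      by (rule suminf_finite) (auto simp: a_def hk_zero)
    ultimately show ?thesis unfolding a_def by (simp add: sum_distrib_left algebra_simps)
  qed
  have lim: "(\<lambda>g. real (fib (g + 1)) * ?q ^ g + (\<Sum>n. a n g)) \<longlonglongrightarrow> \<phi> / sqrt 5 + (\<Sum>n. T (n+1) / sqrt 5)"
    by (intro tendsto_add fiblim tan)
  have lim2: "(\<lambda>g. real (t_count g) * \<phi> powr (- real g)) \<longlonglongrightarrow> \<phi> / sqrt 5 + (\<Sum>n. T (n+1) / sqrt 5)"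
  proof (rule Lim_transform_eventually[OF lim])
    show "\<forall>\<^sub>F g in sequentially. real (fib (g + 1)) * ?q ^ g + (\<Sum>n. a n g) = real (t_count g) * \<phi> powr (- real g)"
      using eventually_ge_at_top[of 1] by eventually_elim (simp add: eq)
  qed
  have "(\<Sum>n. T (n+1) / sqrt 5) = (1 / sqrt 5) * (\<Sum>n. T (n + 1))"
    using suminf_divide[OF sumT, of "sqrt 5"] by simp
  then show ?thesis using sumT lim2 by simp
qed


end
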